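(* None of the graph properties $\mathsf{NON\text{-}EULERIAN}$, $\mathsf{HAMILTONIAN}$, $\mathsf{NON\text{-}HAMILTONIAN}$ belongs to $\mathrm{NLP}$.
   Context: Graphs. All graphs are finite, nonempty, simple, undirected and connected, and labeled: a graph is a triple $G=(V(G),E(G),\lambda_G)$ with labeling $\lambda_G:V(G)\to\{0,1\}^*$. $\mathsf{GRAPH}$ is the set of all graphs. A graph property is a subset of $\mathsf{GRAPH}$ closed under label-preserving isomorphism. $N^G_r(u)$ denotes the subgraph of $G$ induced by the nodes at distance at most $r$ from $u$. $\mathsf{EULERIAN}$ is the set of graphs containing a closed walk using every edge exactly once; $\mathsf{HAMILTONIAN}$ is the set of graphs containing a cycle through every node exactly once (labels irrelevant in both); $\mathsf{NON\text{-}EULERIAN}=\mathsf{GRAPH}\setminus\mathsf{EULERIAN}$ and $\mathsf{NON\text{-}HAMILTONIAN}=\mathsf{GRAPH}\setminus\mathsf{HAMILTONIAN}$. Identifiers and certificates. An identifier assignment of $G$ is a map $\mathrm{id}:V(G)\to\{0,1\}^*$; it is $r$-locally unique if $\mathrm{id}(u)\neq\mathrm{id}(v)$ for all distinct nodes $u,v$ at distance at most $2r$. Identifiers are ordered lexicographically (a proper prefix is smaller). A certificate assignment is a map $\kappa:V(G)\to\{0,1\}^*$; for $r\in\mathbb N$ and $p:\mathbb N\to\mathbb N$ it is $(r,p)$-bounded (w.r.t. $(G,\mathrm{id})$) if $|\kappa(u)|\le p\big(\sum_{v\in N^G_r(u)}(1+|\lambda_G(v)|+|\mathrm{id}(v)|)\big)$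 for every node $u$. Distributed Turing machines. Such a machine $M$ is a Turing machine with three one-way-infinite tapes (receiving, internal, sending) over the alphabet $\{\vdash,\square,\#,0,1\}$ (left-end marker, blank, separator, bits), with designated states start, pause, stop. It is executed on a graph $G$ under an (at least $1$-locally unique) identifier assignment $\mathrm{id}$ and a certificate assignment $\kappa$: every node runs its own copy of $M$ in synchronous rounds. In each round, a node $u$ whose neighbors are $v_1,\dots,v_d$ in increasing identifier order (i) gets $m_1\#\cdots\#m_d\#$ on its receiving tape, where $m_i$ is the message sent to it by $v_i$ in the previous round (empty in the first round); (ii) its sending tape is emptied, its internal tape is initialized to $\lambda_G(u)\#\mathrm{id}(u)\#\kappa(u)$ in the first round and otherwise keeps its content, and, unless $u$ reached stop in an earlier round, $M$ runs from state start with all heads leftmost until it enters pause or stop; (iii) $u$ sends to $v_i$ the $i$-th $\#$-separated bit string on its sending tape (the empty string if there is none). The execution terminates once all nodes are in stop; $G$ is accepted, written $M(G,\mathrm{id},\kappa)\equiv\mathrm{accept}$, if at that point every node has exactly the bit string $1$ on its internal tape (symbols other than $0,1$ ignored). A local-polynomial machine is a distributed Turing machine for which there are a constant $c$ and a polynomial $q$ such that, on every graph and under all identifier and certificate assignments, all nodes reach stop within $c$ rounds, and in every round every node makes at most $q(n)$ computation steps, $n$ being the total length of its receiving- and internal-tape contents at the beginning of the round. $\mathrm{NLP}$ is the class of graph properties $P$ for which there exist a local-polynomial machine $M$, constants $r_{\mathrm{id}},r\ge 1$ and a polynomial $p$ such that for every graph $G$ and every $r_{\mathrm{id}}$-locally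 unique identifier assignment $\mathrm{id}$ of $G$: $G\in P\iff\exists\kappa\,:\,M(G,\mathrm{id},\kappa)\equiv\mathrm{accept}$, $\kappa$ ranging over $(r,p)$-bounded certificate assignments of $(G,\mathrm{id})$. *)

theory Defs
  imports Main "HOL-Library.List_Lexorder" "HOL-Computational_Algebra.Polynomial"
begin

text \<open>Vertices are natural numbers; every finite graph is isomorphic to one of this form.
  Bit strings are bool lists (False = 0, True = 1).\<close>

record lgraph =
  verts :: "nat set"
  adj   :: "nat \<Rightarrow> nat \<Rightarrow> bool"
  lab   :: "nat \<Rightarrow> bool list"

fun near :: "lgraph \<Rightarrow> nat \<Rightarrow> nat \<Rightarrow> nat \<Rightarrow> bool" where
  "near G 0 u v = (u \<in> verts G \<and> v = u)"
| "near G (Suc k) u v = (near G k u v \<or> (\<exists>w. near G k u w \<and> adj G w v))"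

definition GRAPH :: "lgraph set" where
  "GRAPH = {G. finite (verts G) \<and> verts G \<noteq> {}
     \<and> (\<forall>u v. adj G u v \<longrightarrow> u \<in> verts G \<and> v \<in> verts G)
     \<and> (\<forall>u v. adj G u v = adj G v u)
     \<and> (\<forall>u. \<not> adj G u u)
     \<and> (\<forall>u\<in>verts G. \<forall>v\<in>verts G. \<exists>k. near G k u v)}"

definition graph_iso :: "lgraph \<Rightarrow> lgraph \<Rightarrow> bool" where
  "graph_iso G H = (\<exists>f. bij_betw f (verts G) (verts H)
     \<and> (\<forall>u\<in>verts G. \<forall>v\<in>verts G. adj G u v = adj H (f u) (f v))
     \<and> (\<forall>u\<in>verts G. lab H (f u) = lab G u))"

definition graph_property :: "lgraph set \<Rightarrow> bool" where
  "graph_property P = (P \<subseteq> GRAPH \<and> (\<forall>G H. G \<in> P \<longrightarrow> H \<in> GRAPH \<longrightarrow> graph_iso G H \<longrightarrow> H \<in> P))"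

definition edges :: "lgraph \<Rightarrow> nat set set" where
  "edges G = {{u, v} | u v. adj G u v}"

definition EULERIAN :: "lgraph set" where
  "EULERIAN = {G \<in> GRAPH. \<exists>w. w \<noteq> [] \<and> hd w = last w \<and> set w \<subseteq> verts G
     \<and> (\<forall>i < length w - 1. adj G (w ! i) (w ! Suc i))
     \<and> distinct (map (\<lambda>i. {w ! i, w ! Suc i}) [0..<length w - 1])
     \<and> set (map (\<lambda>i. {w ! i, w ! Suc i}) [0..<length w - 1]) = edges G}"

definition HAMILTONIAN :: "lgraph set" where
  "HAMILTONIAN = {G \<in> GRAPH. \<exists>c. distinct c \<and> length c \<ge> 3 \<and> set c = verts G
     \<and> (\<forall>i < length c - 1. adj G (c ! i) (c ! Suc i)) \<and> adj G (last c) (hd c)}"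

definition NON_EULERIAN :: "lgraph set" where
  "NON_EULERIAN = GRAPH - EULERIAN"

definition NON_HAMILTONIAN :: "lgraph set" where
  "NON_HAMILTONIAN = GRAPH - HAMILTONIAN"

definition locally_unique :: "nat \<Rightarrow> lgraph \<Rightarrow> (nat \<Rightarrow> bool list) \<Rightarrow> bool" where
  "locally_unique r G idf = (\<forall>u\<in>verts G. \<forall>v\<in>verts G.
      u \<noteq> v \<and> near G (2 * r) u v \<longrightarrow> idf u \<noteq> idf v)"

definition cert_bounded :: "nat \<Rightarrow> nat poly \<Rightarrow> lgraph \<Rightarrow> (nat \<Rightarrow> bool list)
    \<Rightarrow> (nat \<Rightarrow> bool list) \<Rightarrow> bool" where
  "cert_bounded r p G idf \<kappa> = (\<forall>u\<in>verts G. length (\<kappa> u) \<le>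
     poly p (\<Sum>v\<in>{v. near G r u v}. 1 + length (lab G v) + length (idf v)))"

text \<open>Neighbors in increasing identifier order (lexicographic order on bool lists from
  List_Lexorder: a proper prefix is smaller, False < True).\<close>
definition nbrs :: "lgraph \<Rightarrow> (nat \<Rightarrow> bool list) \<Rightarrow> nat \<Rightarrow> nat list" where
  "nbrs G idf u = (SOME ns. distinct ns \<and> set ns = {v. adj G u v}
      \<and> sorted_wrt (\<lambda>a b. idf a < idf b) ns)"

datatype sym = LEnd | Blank | Sep | Zero | One
datatype mv = MvL | MvR | MvS

record dtm =
  states   :: "nat set"
  start_st :: nat
  pause_st :: nat
  stop_st  :: nat
  delta    :: "nat \<Rightarrow> sym \<times> sym \<times> sym \<Rightarrow> nat \<times> (sym \<times> sym \<times> sym) \<times> (mv \<times> mv \<times> mv)"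

definition wf_dtm :: "dtm \<Rightarrow> bool" where
  "wf_dtm M = (finite (states M) \<and> start_st M \<in> states M \<and> pause_st M \<in> states M
     \<and> stop_st M \<in> states M \<and> pause_st M \<noteq> stop_st M
     \<and> (\<forall>q\<in>states M. \<forall>a. fst (delta M q a) \<in> states M))"

text \<open>A tape: the cells 1,2,... as a list (blanks beyond), cell 0 holds the left-end
  marker, and the head position.\<close>
type_synonym tape = "sym list \<times> nat"

definition read_tape :: "tape \<Rightarrow> sym" where
  "read_tape t = (case t of (cs, p) \<Rightarrow>
     if p = 0 then LEnd else if p - 1 < length cs then cs ! (p - 1) else Blank)"

definition write_tape :: "sym \<Rightarrow> tape \<Rightarrow> tape" where
  "write_tape s t = (case t of (cs, p) \<Rightarrow>
     if p = 0 then (cs, p) else ((cs @ replicate (p - length cs) Blank)[p - 1 := s], p))"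

definition move_tape :: "mv \<Rightarrow> tape \<Rightarrow> tape" where
  "move_tape m t = (case t of (cs, p) \<Rightarrow>
     (case m of MvL \<Rightarrow> (cs, p - 1) | MvR \<Rightarrow> (cs, Suc p) | MvS \<Rightarrow> (cs, p)))"

text \<open>Configuration: state, receiving tape, internal tape, sending tape.\<close>
type_synonym cfg = "nat \<times> tape \<times> tape \<times> tape"

definition halted :: "dtm \<Rightarrow> nat \<Rightarrow> bool" where
  "halted M q = (q = pause_st M \<or> q = stop_st M)"

definition step :: "dtm \<Rightarrow> cfg \<Rightarrow> cfg" where
  "step M c = (case c of (q, a, b, d) \<Rightarrow>
     if halted M q then c else
     (case delta M q (read_tape a, read_tape b, read_tape d) of
        (q', (x, y, z), (m1, m2, m3)) \<Rightarrow>
          (q', move_tape m1 (write_tape x a), move_tape m2 (write_tape y b),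
               move_tape m3 (write_tape z d))))"

definition run_steps :: "dtm \<Rightarrow> nat \<Rightarrow> cfg \<Rightarrow> cfg" where
  "run_steps M k c = (step M ^^ k) c"

definition halts_within :: "dtm \<Rightarrow> cfg \<Rightarrow> nat \<Rightarrow> bool" where
  "halts_within M c k = (\<exists>j\<le>k. halted M (fst (run_steps M j c)))"

definition run_result :: "dtm \<Rightarrow> cfg \<Rightarrow> cfg" where
  "run_result M c = run_steps M (LEAST j. halted M (fst (run_steps M j c))) c"

definition content :: "sym list \<Rightarrow> sym list" where
  "content cs = rev (dropWhile (\<lambda>s. s = Blank) (rev cs))"

definition enc :: "bool list \<Rightarrow> sym list" where
  "enc bs = map (\<lambda>b. if b then One else Zero) bs"

definition bits_of :: "sym list \<Rightarrow> bool list" where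
  "bits_of cs = map (\<lambda>s. s = One) (filter (\<lambda>s. s = Zero \<or> s = One) cs)"

fun split_sep :: "sym list \<Rightarrow> sym list list" where
  "split_sep [] = [[]]"
| "split_sep (x # xs) = (if x = Sep then [] # split_sep xs
                         else (let r = split_sep xs in (x # hd r) # tl r))"

text \<open>Node state: (reached stop, internal tape cells, messages to send to the neighbors).\<close>
type_synonym nstate = "bool \<times> sym list \<times> bool list list"

definition init_state :: "lgraph \<Rightarrow> (nat \<Rightarrow> bool list) \<Rightarrow> (nat \<Rightarrow> bool list) \<Rightarrow> nat \<Rightarrow> nstate" where
  "init_state G idf \<kappa> u = (False, enc (lab G u) @ [Sep] @ enc (idf u) @ [Sep] @ enc (\<kappa> u), [])"

definition recv_string :: "bool list list \<Rightarrow> sym list" where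
  "recv_string ms = concat (map (\<lambda>m. enc m @ [Sep]) ms)"

definition round_cfg :: "dtm \<Rightarrow> bool list list \<Rightarrow> nstate \<Rightarrow> cfg" where
  "round_cfg M ms s = (start_st M, (recv_string ms, 0), (fst (snd s), 0), ([], 0))"

definition node_round :: "dtm \<Rightarrow> bool list list \<Rightarrow> nstate \<Rightarrow> nstate" where
  "node_round M ms s = (if fst s then (True, fst (snd s), []) else
     (case run_result M (round_cfg M ms s) of (q, _, (it, _), (st, _)) \<Rightarrow>
        (q = stop_st M, it, map bits_of (split_sep (content st)))))"

definition pos :: "nat list \<Rightarrow> nat \<Rightarrow> nat" where
  "pos ns u = (LEAST i. i < length ns \<and> ns ! i = u)"

definition msg_from :: "lgraph \<Rightarrow> (nat \<Rightarrow> bool list) \<Rightarrow> (nat \<Rightarrow> nstate) \<Rightarrow> nat \<Rightarrow> nat \<Rightarrow> bool list" where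
  "msg_from G idf S v u = (let ss = snd (snd (S v)); i = pos (nbrs G idf v) u in
      if i < length ss then ss ! i else [])"

definition received :: "lgraph \<Rightarrow> (nat \<Rightarrow> bool list) \<Rightarrow> (nat \<Rightarrow> nstate) \<Rightarrow> nat \<Rightarrow> bool list list" where
  "received G idf S u = map (\<lambda>v. msg_from G idf S v u) (nbrs G idf u)"

fun exec :: "dtm \<Rightarrow> lgraph \<Rightarrow> (nat \<Rightarrow> bool list) \<Rightarrow> (nat \<Rightarrow> bool list) \<Rightarrow> nat \<Rightarrow> nat \<Rightarrow> nstate" where
  "exec M G idf \<kappa> 0 = init_state G idf \<kappa>"
| "exec M G idf \<kappa> (Suc t) = (\<lambda>u. node_round M (received G idf (exec M G idf \<kappa> t) u)
                                                 (exec M G idf \<kappa> t u))"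

definition accepts :: "dtm \<Rightarrow> lgraph \<Rightarrow> (nat \<Rightarrow> bool list) \<Rightarrow> (nat \<Rightarrow> bool list) \<Rightarrow> bool" where
  "accepts M G idf \<kappa> = ((\<exists>T. \<forall>u\<in>verts G. fst (exec M G idf \<kappa> T u)) \<and>
     (let T = (LEAST T. \<forall>u\<in>verts G. fst (exec M G idf \<kappa> T u)) in
       \<forall>u\<in>verts G. bits_of (fst (snd (exec M G idf \<kappa> T u))) = [True]))"

definition local_poly :: "dtm \<Rightarrow> bool" where
  "local_poly M = (\<exists>(c::nat) (q::nat poly). \<forall>G\<in>GRAPH. \<forall>idf \<kappa>. locally_unique 1 G idf \<longrightarrow>
     (\<forall>u\<in>verts G. fst (exec M G idf \<kappa> c u)) \<and>
     (\<forall>t. \<forall>u\<in>verts G. \<not> fst (exec M G idf \<kappa> t u) \<longrightarrow>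
        (let S = exec M G idf \<kappa> t; ms = received G idf S u in
         halts_within M (round_cfg M ms (S u))
           (poly q (length (recv_string ms) + length (content (fst (snd (S u)))))))))"

definition NLP :: "lgraph set set" where
  "NLP = {P. graph_property P \<and> (\<exists>M r_id r (p::nat poly). wf_dtm M \<and> local_poly M
     \<and> r_id \<ge> 1 \<and> r \<ge> 1 \<and>
     (\<forall>G\<in>GRAPH. \<forall>idf. locally_unique r_id G idf \<longrightarrow>
        (G \<in> P \<longleftrightarrow> (\<exists>\<kappa>. cert_bounded r p G idf \<kappa> \<and> accepts M G idf \<kappa>))))}"

end

theory Submission
  imports Defs
begin

lemma near_start: "near G k u v \<Longrightarrow> u \<in> verts G"
  by (induction k arbitrary: v) auto

lemma near_mono: "near G k u v \<Longrightarrow> k \<le> k' \<Longrightarrow> near G k' u v"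
proof (induction k' arbitrary: v)
  case 0 then show ?case by simp
next
  case (Suc k') then show ?case by (cases "k = Suc k'") auto
qed

lemma near_refl: "u \<in> verts G \<Longrightarrow> near G k u u"
  using near_mono[of G 0 u u k] by simp

lemma near_cons: "adj G u x \<Longrightarrow> u \<in> verts G \<Longrightarrow> near G k x y \<Longrightarrow> near G (Suc k) u y"
proof (induction k arbitrary: y)
  case 0 then show ?case by auto
next
  case (Suc k)
  from Suc.prems(3) have "near G k x y \<or> (\<exists>w. near G k x w \<and> adj G w y)" by simp
  then show ?case
  proof (elim disjE exE conjE)
    assume "near G k x y" then show ?thesis using Suc by (metis near.simps(2))
  next
    fix w assume "near G k x w" "adj G w y"
    then show ?thesis using Suc by (metis near.simps(2))
  qed
qed

lemma near_snoc: "near G k u x \<Longrightarrow> adj G x y \<Longrightarrow> near G (Suc k) u y"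
  by auto

lemma GRAPH_D:
  assumes "G \<in> GRAPH"
  shows "finite (verts G)" "adj G u v \<Longrightarrow> u \<in> verts G" "adj G u v \<Longrightarrow> v \<in> verts G"
    "adj G u v = adj G v u" "\<not> adj G u u"
  using assms unfolding GRAPH_def by auto

lemma near_end: "G \<in> GRAPH \<Longrightarrow> near G k u v \<Longrightarrow> v \<in> verts G"
  by (induction k arbitrary: v) (auto dest: GRAPH_D)

lemma poly_mono_nat: "(x::nat) \<le> y \<Longrightarrow> poly (p::nat poly) x \<le> poly p y"
proof (induction p rule: pCons_induct)
  case 0 then show ?case by simp
next
  case (pCons a p) then show ?case by (simp add: mult_mono)
qed

lemma nbrs_exists:
  fixes idf :: "nat \<Rightarrow> bool list" and S :: "nat set"
  assumes "finite S" "inj_on idf S"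
  shows "\<exists>ns. distinct ns \<and> set ns = S \<and> sorted_wrt (\<lambda>a b. idf a < idf b) ns"
proof -
  let ?ns = "sort_key idf (sorted_list_of_set S)"
  have d: "distinct ?ns" by (simp add: assms)
  have s: "set ?ns = S" by (simp add: assms)
  have "distinct (map idf ?ns)" using d s assms(2) by (simp add: distinct_map)
  moreover have "sorted (map idf ?ns)" by simp
  ultimately have "sorted_wrt (<) (map idf ?ns)" by (simp add: strict_sorted_iff)
  then have "sorted_wrt (\<lambda>a b. idf a < idf b) ?ns" by (simp add: sorted_wrt_map)
  then show ?thesis using d s by blast
qed

lemma nbrs_prop:
  assumes "finite {v. adj G u v}" "inj_on idf {v. adj G u v}"
  shows "distinct (nbrs G idf u) \<and> set (nbrs G idf u) = {v. adj G u v}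
      \<and> sorted_wrt (\<lambda>a b. idf a < idf b) (nbrs G idf u)"
  unfolding nbrs_def using someI_ex[OF nbrs_exists[OF assms]] .

lemma sorted_unique:
  fixes idf :: "nat \<Rightarrow> bool list"
  assumes "inj_on idf S" "set xs = S" "set ys = S"
    "sorted_wrt (\<lambda>a b. idf a < idf b) xs" "sorted_wrt (\<lambda>a b. idf a < idf b) ys"
  shows "xs = ys"
proof -
  have "map idf xs = map idf ys"
    using assms by (intro strict_sorted_equal) (auto simp: sorted_wrt_map image_set)
  then show ?thesis using assms(1-3) by (simp add: inj_on_map_eq_map)
qed

lemma nbrs_unique:
  assumes "finite {v. adj G u v}" "inj_on idf {v. adj G u v}"
    "set ns = {v. adj G u v}" "sorted_wrt (\<lambda>a b. idf a < idf b) ns"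
  shows "nbrs G idf u = ns"
  using nbrs_prop[OF assms(1,2)] sorted_unique[OF assms(2)] assms(3,4) by blast

lemma pos_map:
  assumes "inj_on F (set xs)" "x \<in> set xs"
  shows "pos (map F xs) (F x) = pos xs x"
  unfolding pos_def
proof (rule arg_cong[where f=Least], rule ext)
  fix i show "(i < length (map F xs) \<and> map F xs ! i = F x) = (i < length xs \<and> xs ! i = x)"
    using assms by (auto simp: inj_on_eq_iff)
qed



lemma list_all2_map_eq:
  "list_all2 P xs ys \<Longrightarrow> (\<And>x y. P x y \<Longrightarrow> f x = g y) \<Longrightarrow> map f xs = map g ys"
  by (induction rule: list_all2_induct) auto

lemma exec_sim:
  assumes init: "\<And>m v w. Q m v w \<Longrightarrow> init_state H idH \<kappa>H v = init_state G idG \<kappa>G w"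
  and mono: "\<And>m v w. Q (Suc m) v w \<Longrightarrow> Q m v w"
  and stp: "\<And>m v w. Q (Suc m) v w \<Longrightarrow> list_all2 (\<lambda>v' w'. Q m v' w'
        \<and> pos (nbrs H idH v') v = pos (nbrs G idG w') w) (nbrs H idH v) (nbrs G idG w)"
  shows "Q m v w \<Longrightarrow> exec M H idH \<kappa>H m v = exec M G idG \<kappa>G m w"
proof (induction m arbitrary: v w)
  case 0 then show ?case using init by simp
next
  case (Suc m)
  have e: "exec M H idH \<kappa>H m v = exec M G idG \<kappa>G m w" using Suc mono by blast
  have r: "received H idH (exec M H idH \<kappa>H m) v = received G idG (exec M G idG \<kappa>G m) w"
    unfolding received_def
  proof (rule list_all2_map_eq[OF stp[OF Suc.prems]])
    fix v' w' assume "Q m v' w' \<and> pos (nbrs H idH v') v = pos (nbrs G idG w') w"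
    then have "exec M H idH \<kappa>H m v' = exec M G idG \<kappa>G m w'" and "pos (nbrs H idH v') v = pos (nbrs G idG w') w"
      using Suc.IH by auto
    then show "msg_from H idH (exec M H idH \<kappa>H m) v' v = msg_from G idG (exec M G idG \<kappa>G m) w' w"
      unfolding msg_from_def by (simp add: Let_def)
  qed
  show ?case using e r by simp
qed

lemma exec_stopped:
  assumes "fst (exec M G idf \<kappa> t u)" "t \<le> t'"
  shows "fst (exec M G idf \<kappa> t' u) \<and> fst (snd (exec M G idf \<kappa> t' u)) = fst (snd (exec M G idf \<kappa> t u))"
  using assms(2)
proof (induction t')
  case 0 then show ?case using assms by simp
next
  case (Suc t')
  show ?case
  proof (cases "t = Suc t'")
    case True then show ?thesis using assms by simp
  next
    case False
    then have "fst (exec M G idf \<kappa> t' u) \<and> fst (snd (exec M G idf \<kappa> t' u)) = fst (snd (exec M G idf \<kappa> t u))"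
      using Suc by simp
    then show ?thesis by (simp add: node_round_def)
  qed
qed

lemma accepts_transfer:
  assumes acc: "accepts M G idG \<kappa>G"
  and stopG: "\<forall>w\<in>verts G. fst (exec M G idG \<kappa>G c w)"
  and corr: "\<forall>v\<in>verts H. \<exists>w\<in>verts G. \<forall>t\<le>c. exec M H idH \<kappa>H t v = exec M G idG \<kappa>G t w"
  shows "accepts M H idH \<kappa>H"
proof -
  have exH: "\<forall>u\<in>verts H. fst (exec M H idH \<kappa>H c u)" using corr stopG by fastforce
  define TH where "TH = (LEAST T. \<forall>u\<in>verts H. fst (exec M H idH \<kappa>H T u))"
  have THc: "TH \<le> c" unfolding TH_def using exH by (rule Least_le)
  have THs: "\<forall>u\<in>verts H. fst (exec M H idH \<kappa>H TH u)" unfolding TH_def using exH by (rule LeastI)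
  define TG where "TG = (LEAST T. \<forall>u\<in>verts G. fst (exec M G idG \<kappa>G T u))"
  from acc have exG: "\<exists>T. \<forall>u\<in>verts G. fst (exec M G idG \<kappa>G T u)"
    and bG: "\<forall>u\<in>verts G. bits_of (fst (snd (exec M G idG \<kappa>G TG u))) = [True]"
    unfolding accepts_def TG_def by (auto simp: Let_def)
  have TGs: "\<forall>u\<in>verts G. fst (exec M G idG \<kappa>G TG u)" unfolding TG_def using exG by (rule LeastI_ex)
  have "\<forall>u\<in>verts H. bits_of (fst (snd (exec M H idH \<kappa>H TH u))) = [True]"
  proof
    fix u assume u: "u \<in> verts H"
    then obtain w where w: "w \<in> verts G" and eq: "\<forall>t\<le>c. exec M H idH \<kappa>H t u = exec M G idG \<kappa>G t w"
      using corr by blast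
    have e1: "exec M H idH \<kappa>H TH u = exec M G idG \<kappa>G TH w" using eq THc by blast
    have s1: "fst (exec M G idG \<kappa>G TH w)" using e1 THs u by metis
    have s2: "fst (exec M G idG \<kappa>G TG w)" using TGs w by blast
    have "fst (snd (exec M G idG \<kappa>G TH w)) = fst (snd (exec M G idG \<kappa>G TG w))"
    proof (cases "TH \<le> TG")
      case True then show ?thesis using exec_stopped[OF s1 True] by simp
    next
      case False then show ?thesis using exec_stopped[OF s2, of TH] by simp
    qed
    then show "bits_of (fst (snd (exec M H idH \<kappa>H TH u))) = [True]" using e1 bG w by simp
  qed
  then show ?thesis unfolding accepts_def TH_def[symmetric] using exH by (auto simp: Let_def)
qed



definition loccov :: "lgraph \<Rightarrow> lgraph \<Rightarrow> (nat \<Rightarrow> bool list) \<Rightarrow> (nat \<Rightarrow> bool list)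
   \<Rightarrow> (nat \<Rightarrow> bool list) \<Rightarrow> (nat \<Rightarrow> bool list) \<Rightarrow> (nat \<Rightarrow> nat) \<Rightarrow> nat \<Rightarrow> bool" where
  "loccov H G idH idG \<kappa>H \<kappa>G F u \<longleftrightarrow> lab H u = lab G (F u) \<and> idH u = idG (F u) \<and> \<kappa>H u = \<kappa>G (F u)
     \<and> (\<forall>x. adj H u x \<longrightarrow> adj G (F u) (F x))
     \<and> (\<forall>y. adj G (F u) y \<longrightarrow> (\<exists>x. adj H u x \<and> F x = y))
     \<and> inj_on F {x. adj H u x}"

lemma inj_ids_nbrs:
  assumes "G \<in> GRAPH" "locally_unique 1 G idG"
  shows "inj_on idG {v. adj G y v}"
proof (rule inj_onI)
  fix a b assume a: "a \<in> {v. adj G y v}" and b: "b \<in> {v. adj G y v}" and e: "idG a = idG b"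
  show "a = b"
  proof (rule ccontr)
    assume ne: "a \<noteq> b"
    have ay: "adj G a y" using a GRAPH_D(4)[OF assms(1)] by auto
    have av: "a \<in> verts G" using ay GRAPH_D(2)[OF assms(1)] by blast
    have "near G 1 a y" using ay av by auto
    then have "near G 2 a b" using b by (metis near_snoc numeral_2_eq_2 One_nat_def mem_Collect_eq)
    moreover have "b \<in> verts G" using b GRAPH_D(3)[OF assms(1)] by blast
    ultimately show False using assms(2) ne e av unfolding locally_unique_def by auto
  qed
qed

lemma nbrs_map:
  assumes G: "G \<in> GRAPH" and H: "H \<in> GRAPH" and lu: "locally_unique 1 G idG"
  and lc: "loccov H G idH idG \<kappa>H \<kappa>G F u"
  and ids: "\<forall>x. adj H u x \<longrightarrow> idH x = idG (F x)"
  shows "map F (nbrs H idH u) = nbrs G idG (F u)"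
proof -
  let ?NH = "{x. adj H u x}"
  have fH: "finite ?NH" using GRAPH_D(1,3)[OF H] by (metis finite_subset mem_Collect_eq subsetI)
  have fG: "finite {x. adj G (F u) x}" using GRAPH_D(1,3)[OF G] by (metis finite_subset mem_Collect_eq subsetI)
  have injG: "inj_on idG {x. adj G (F u) x}" by (rule inj_ids_nbrs[OF G lu])
  have injF: "inj_on F ?NH" using lc unfolding loccov_def by blast
  have img: "F ` ?NH = {x. adj G (F u) x}" using lc unfolding loccov_def by blast
  have injH: "inj_on idH ?NH"
  proof (rule inj_onI)
    fix a b assume a: "a \<in> ?NH" and b: "b \<in> ?NH" and e: "idH a = idH b"
    then have "idG (F a) = idG (F b)" using ids by auto
    then have "F a = F b" using injG img a b by (auto simp: inj_on_def)
    then show "a = b" using injF a b by (auto simp: inj_on_def)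
  qed
  have P: "distinct (nbrs H idH u) \<and> set (nbrs H idH u) = ?NH \<and> sorted_wrt (\<lambda>a b. idH a < idH b) (nbrs H idH u)"
    by (rule nbrs_prop[OF fH injH])
  have s: "set (map F (nbrs H idH u)) = {x. adj G (F u) x}" using P img by simp
  have "sorted_wrt (\<lambda>a b. idG (F a) < idG (F b)) (nbrs H idH u)"
    using P ids by (auto intro: sorted_wrt_mono_rel[of _ "\<lambda>a b. idH a < idH b"])
  then have "sorted_wrt (\<lambda>a b. idG a < idG b) (map F (nbrs H idH u))" by (simp add: sorted_wrt_map)
  then show ?thesis using nbrs_unique[OF fG injG s] by simp
qed

definition Qf where
  "Qf H G idH idG \<kappa>H \<kappa>G m v w \<longleftrightarrow> v \<in> verts H \<and>
     (\<exists>F. F v = w \<and> (\<forall>u. near H (Suc m) v u \<longrightarrow> loccov H G idH idG \<kappa>H \<kappa>G F u))"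

lemma list_all2_mapI: "(\<forall>x\<in>set xs. P x (F x)) \<Longrightarrow> list_all2 P xs (map F xs)"
  by (induction xs) auto

lemma exec_loccov:
  assumes G: "G \<in> GRAPH" and H: "H \<in> GRAPH" and lu: "locally_unique 1 G idG"
  shows "Qf H G idH idG \<kappa>H \<kappa>G m v w \<Longrightarrow> exec M H idH \<kappa>H m v = exec M G idG \<kappa>G m w"
proof (rule exec_sim[where Q="Qf H G idH idG \<kappa>H \<kappa>G"])
  fix m v w assume "Qf H G idH idG \<kappa>H \<kappa>G m v w"
  then obtain F where "F v = w" "v \<in> verts H" "loccov H G idH idG \<kappa>H \<kappa>G F v"
    unfolding Qf_def using near_refl by blast
  then show "init_state H idH \<kappa>H v = init_state G idG \<kappa>G w"
    unfolding init_state_def loccov_def by simp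
next
  fix m v w assume "Qf H G idH idG \<kappa>H \<kappa>G (Suc m) v w"
  then show "Qf H G idH idG \<kappa>H \<kappa>G m v w"
  proof -
    from \<open>Qf H G idH idG \<kappa>H \<kappa>G (Suc m) v w\<close> obtain F where "v \<in> verts H" "F v = w"
      "\<forall>u. near H (Suc (Suc m)) v u \<longrightarrow> loccov H G idH idG \<kappa>H \<kappa>G F u" unfolding Qf_def by blast
    moreover have "near H (Suc (Suc m)) v u" if "near H (Suc m) v u" for u
      using near_mono[OF that, of "Suc (Suc m)"] by (simp del: near.simps)
    ultimately show ?thesis unfolding Qf_def by blast
  qed
next
  fix m v w assume Q: "Qf H G idH idG \<kappa>H \<kappa>G (Suc m) v w"
  then obtain F where Fv: "F v = w" and v: "v \<in> verts H"
    and lc: "\<And>u. near H (Suc (Suc m)) v u \<Longrightarrow> loccov H G idH idG \<kappa>H \<kappa>G F u"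
    unfolding Qf_def by blast
  have n1: "near H (Suc (Suc m)) v x" if "adj H v x" for x
    using near_cons[OF that v near_refl[of x H "Suc m"]] GRAPH_D(3)[OF H that] by simp
  have n2: "near H (Suc (Suc m)) v y" if "adj H v x" "adj H x y" for x y
  proof -
    have "near H 1 x y" using that GRAPH_D(2)[OF H] by auto
    then have "near H (Suc 1) v y" by (rule near_cons[OF that(1) v])
    then show ?thesis by (rule near_mono) simp
  qed
  have ids: "\<forall>x. adj H v x \<longrightarrow> idH x = idG (F x)" using lc n1 unfolding loccov_def by blast
  have nv: "map F (nbrs H idH v) = nbrs G idG w"
    using nbrs_map[OF G H lu lc[OF near_refl[OF v]] ids] Fv by simp
  have sv: "set (nbrs H idH v) = {x. adj H v x}"
  proof -
    have fH: "finite {x. adj H v x}" using GRAPH_D(1,3)[OF H] by (metis finite_subset mem_Collect_eq subsetI)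
    have "inj_on idH {x. adj H v x}"
    proof (rule inj_onI)
      fix a b assume a: "a \<in> {x. adj H v x}" and b: "b \<in> {x. adj H v x}" and e: "idH a = idH b"
      have lcv: "loccov H G idH idG \<kappa>H \<kappa>G F v" using lc near_refl[OF v] by blast
      have "F a \<in> {x. adj G (F v) x}" "F b \<in> {x. adj G (F v) x}" using lcv a b unfolding loccov_def by auto
      moreover have "idG (F a) = idG (F b)" using e ids a b by auto
      ultimately have "F a = F b" using inj_ids_nbrs[OF G lu] by (auto simp: inj_on_def)
      then show "a = b" using lcv a b unfolding loccov_def by (auto simp: inj_on_def)
    qed
    then show ?thesis using nbrs_prop[OF fH] by blast
  qed
  show "list_all2 (\<lambda>v' w'. Qf H G idH idG \<kappa>H \<kappa>G m v' w' \<and> pos (nbrs H idH v') v = pos (nbrs G idG w') w)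
     (nbrs H idH v) (nbrs G idG w)"
    unfolding nv[symmetric]
  proof (rule list_all2_mapI, intro ballI conjI)
    fix x assume "x \<in> set (nbrs H idH v)"
    then have x: "adj H v x" using sv by simp
    have xv: "x \<in> verts H" using GRAPH_D(3)[OF H x] .
    show "Qf H G idH idG \<kappa>H \<kappa>G m x (F x)"
      unfolding Qf_def using xv lc near_cons[OF x v] by blast
    have lcx: "loccov H G idH idG \<kappa>H \<kappa>G F x" using lc n1[OF x] by blast
    have idsx: "\<forall>y. adj H x y \<longrightarrow> idH y = idG (F y)" using lc n2[OF x] unfolding loccov_def by blast
    have nx: "map F (nbrs H idH x) = nbrs G idG (F x)" by (rule nbrs_map[OF G H lu lcx idsx])
    have fH: "finite {y. adj H x y}" using GRAPH_D(1,3)[OF H] by (metis finite_subset mem_Collect_eq subsetI)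
    have injF: "inj_on F {y. adj H x y}" using lcx unfolding loccov_def by blast
    have "inj_on idH {y. adj H x y}"
    proof (rule inj_onI)
      fix a b assume a: "a \<in> {y. adj H x y}" and b: "b \<in> {y. adj H x y}" and e: "idH a = idH b"
      have "F a \<in> {y. adj G (F x) y}" "F b \<in> {y. adj G (F x) y}" using lcx a b unfolding loccov_def by auto
      moreover have "idG (F a) = idG (F b)" using e idsx a b by auto
      ultimately have "F a = F b" using inj_ids_nbrs[OF G lu] by (auto simp: inj_on_def)
      then show "a = b" using injF a b by (auto simp: inj_on_def)
    qed
    then have sx: "set (nbrs H idH x) = {y. adj H x y}" using nbrs_prop[OF fH] by blast
    have vx: "v \<in> set (nbrs H idH x)" using sx x GRAPH_D(4)[OF H] by simp
    show "pos (nbrs H idH x) v = pos (nbrs G idG (F x)) w"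
      unfolding nx[symmetric] Fv[symmetric] using pos_map[of F "nbrs H idH x" v] injF sx vx by simp
  qed
qed



definition cycG :: "nat \<Rightarrow> lgraph" where
  "cycG L = \<lparr>verts = {..<L}, adj = (\<lambda>u v. u < L \<and> v < L \<and>
      (int v = (int u + 1) mod int L \<or> int u = (int v + 1) mod int L)), lab = (\<lambda>_. [])\<rparr>"

definition pathG :: "nat \<Rightarrow> lgraph" where
  "pathG N = \<lparr>verts = {..<N}, adj = (\<lambda>u v. u < N \<and> v < N \<and> (v = Suc u \<or> u = Suc v)), lab = (\<lambda>_. [])\<rparr>"

lemma cyc_adj: "adj (cycG L) u v \<longleftrightarrow> u < L \<and> v < L \<and> (int v = (int u + 1) mod int L \<or> int v = (int u - 1) mod int L)"
proof -
  have "int u = (int v + 1) mod int L \<longleftrightarrow> int v = (int u - 1) mod int L" if "u < L" "v < L"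
  proof
    assume "int u = (int v + 1) mod int L"
    then have "(int u - 1) mod int L = ((int v + 1) mod int L - 1) mod int L" by simp
    also have "\<dots> = int v mod int L" by (simp add: mod_diff_left_eq)
    finally show "int v = (int u - 1) mod int L" using that by simp
  next
    assume "int v = (int u - 1) mod int L"
    then have "(int v + 1) mod int L = ((int u - 1) mod int L + 1) mod int L" by simp
    also have "\<dots> = int u mod int L" by (simp add: mod_add_left_eq)
    finally show "int u = (int v + 1) mod int L" using that by simp
  qed
  then show ?thesis unfolding cycG_def by auto
qed

lemma cyc_near_z: "near (cycG L) d u v \<Longrightarrow> \<exists>z. \<bar>z\<bar> \<le> int d \<and> int v = (int u + z) mod int L"
proof (induction d arbitrary: v)
  case 0 then show ?case by (auto simp: cycG_def intro: exI[of _ 0])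
next
  case (Suc d)
  from Suc.prems have "near (cycG L) d u v \<or> (\<exists>w. near (cycG L) d u w \<and> adj (cycG L) w v)" by simp
  then show ?case
  proof (elim disjE exE conjE)
    assume "near (cycG L) d u v" then show ?thesis using Suc.IH by force
  next
    fix w assume "near (cycG L) d u w" "adj (cycG L) w v"
    then obtain z where z: "\<bar>z\<bar> \<le> int d" "int w = (int u + z) mod int L" and a: "int v = (int w + 1) mod int L \<or> int v = (int w - 1) mod int L"
      using Suc.IH cyc_adj by blast
    from a show ?thesis
    proof
      assume "int v = (int w + 1) mod int L"
      then have "int v = (int u + (z+1)) mod int L" using z by (simp add: mod_add_left_eq add.assoc)
      then show ?thesis using z by (intro exI[of _ "z+1"]) auto
    next
      assume "int v = (int w - 1) mod int L"
      then have "int v = (int u + (z-1)) mod int L" using z by (simp add: mod_diff_left_eq algebra_simps)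
      then show ?thesis using z by (intro exI[of _ "z-1"]) auto
    qed
  qed
qed

lemma cyc_near_fwd: "u < L \<Longrightarrow> near (cycG L) d u (nat ((int u + int d) mod int L))"
proof (induction d)
  case 0 then show ?case by (simp add: cycG_def)
next
  case (Suc d)
  have L: "0 < L" using Suc by simp
  have "adj (cycG L) (nat ((int u + int d) mod int L)) (nat ((int u + int (Suc d)) mod int L))"
  proof -
    have "int (nat ((int u + int (Suc d)) mod int L)) = (int (nat ((int u + int d) mod int L)) + 1) mod int L"
      using L by (simp add: mod_add_left_eq mod_add_right_eq algebra_simps)
    then show ?thesis unfolding cyc_adj using L by (simp add: nat_less_iff)
  qed
  then show ?case using Suc by (meson near_snoc)
qed

lemma cyc_near_bwd: "u < L \<Longrightarrow> near (cycG L) d u (nat ((int u - int d) mod int L))"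
proof (induction d)
  case 0 then show ?case by (simp add: cycG_def)
next
  case (Suc d)
  have L: "0 < L" using Suc by simp
  have "adj (cycG L) (nat ((int u - int d) mod int L)) (nat ((int u - int (Suc d)) mod int L))"
  proof -
    have "int (nat ((int u - int (Suc d)) mod int L)) = (int (nat ((int u - int d) mod int L)) - 1) mod int L"
      using L by (simp add: mod_diff_left_eq algebra_simps)
    then show ?thesis unfolding cyc_adj using L by (simp add: nat_less_iff)
  qed
  then show ?case using Suc by (meson near_snoc)
qed

lemma cyc_GRAPH: assumes "3 \<le> L" shows "cycG L \<in> GRAPH"
proof -
  have conn: "\<exists>k. near (cycG L) k u v" if "u < L" "v < L" for u v
  proof -
    have "(int u + int ((v + L - u) mod L)) mod int L = int v"
    proof -
      have "int ((v + L - u) mod L) = (int v + int L - int u) mod int L"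
        using that by (simp add: zmod_int of_nat_diff)
      then have "(int u + int ((v + L - u) mod L)) mod int L = (int u + (int v + int L - int u)) mod int L"
        by (simp add: mod_add_right_eq)
      also have "\<dots> = int v" using that by simp
      finally show ?thesis .
    qed
    then have "nat ((int u + int ((v + L - u) mod L)) mod int L) = v" by simp
    then show ?thesis using cyc_near_fwd[OF that(1)] by metis
  qed
  have irr: "\<not> adj (cycG L) u u" for u
  proof
    assume "adj (cycG L) u u"
    then have "int u = (int u + 1) mod int L" "u < L" unfolding cycG_def by auto
    then show False using assms
    proof (cases "Suc u < L")
      case True
      then have "(int u + 1) mod int L = int u + 1" by (simp add: mod_pos_pos_trivial)
      then show False using \<open>int u = (int u + 1) mod int L\<close> by simp
    next
      case False
      then have "Suc u = L" using \<open>u < L\<close> by simp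
      then have "int u + 1 = int L" by simp
      then have "(int u + 1) mod int L = 0" by simp
      then show False using \<open>int u = (int u + 1) mod int L\<close> \<open>Suc u = L\<close> assms by simp
    qed
  qed
  have "0 \<in> verts (cycG L)" using assms by (simp add: cycG_def)
  then have ne: "verts (cycG L) \<noteq> {}" by blast
  show ?thesis unfolding GRAPH_def using conn irr ne by (auto simp: cycG_def)
qed



lemma deg1_not_ham:
  assumes G: "G \<in> GRAPH" and x: "x \<in> verts G" and one: "\<And>z. adj G x z \<longleftrightarrow> z = y"
  shows "G \<notin> HAMILTONIAN"
proof
  assume "G \<in> HAMILTONIAN"
  then obtain c where d: "distinct c" and l: "length c \<ge> 3" and s: "set c = verts G"
    and a: "\<forall>i < length c - 1. adj G (c ! i) (c ! Suc i)" and la: "adj G (last c) (hd c)"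
    unfolding HAMILTONIAN_def by blast
  have sym: "\<And>u v. adj G u v = adj G v u" using GRAPH_D(4)[OF G] by blast
  obtain k where k: "k < length c" "c ! k = x" using x s by (metis in_set_conv_nth)
  have cne: "c \<noteq> []" using l by auto
  have lastc: "last c = c ! (length c - 1)" using cne by (simp add: last_conv_nth)
  have hdc: "hd c = c ! 0" using cne by (simp add: hd_conv_nth)
  have dd: "\<And>i j. i < length c \<Longrightarrow> j < length c \<Longrightarrow> c ! i = c ! j \<Longrightarrow> i = j"
    using d by (simp add: nth_eq_iff_index_eq)
  show False
  proof (cases "k = 0")
    case True
    have "0 < length c - 1" using l by simp
    then have "adj G (c ! 0) (c ! Suc 0)" using a by blast
    then have "c ! 1 = y" using one k True by simp
    moreover have "last c = y" using la one k True hdc sym by metis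
    ultimately have "c ! 1 = c ! (length c - 1)" using lastc by simp
    moreover have "length c - 1 < length c" "1 < length c" using l by auto
    ultimately have "1 = length c - 1" using dd by blast
    then show False using l by simp
  next
    case False
    have "k - 1 < length c - 1" using k False by simp
    then have "adj G (c ! (k - 1)) (c ! Suc (k - 1))" using a by blast
    moreover have "Suc (k - 1) = k" using False by simp
    ultimately have y1: "c ! (k - 1) = y" using one sym k by simp
    show False
    proof (cases "k = length c - 1")
      case True
      have "hd c = y" using la one k True lastc by simp
      then have "c ! (k - 1) = c ! 0" using y1 hdc by simp
      moreover have "k - 1 < length c" "0 < length c" using k by auto
      ultimately have "k - 1 = 0" using dd by blast
      then show False using l True by simp
    next
      case False2: False
      have "k < length c - 1" using k False2 by simp
      then have "adj G (c ! k) (c ! Suc k)" using a by blast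
      then have "c ! Suc k = y" using one k by simp
      then have "c ! (k - 1) = c ! Suc k" using y1 by simp
      moreover have "k - 1 < length c" "Suc k < length c" using k False2 by auto
      ultimately have "k - 1 = Suc k" using dd by blast
      then show False by simp
    qed
  qed
qed

lemma deg1_not_eul:
  assumes G: "G \<in> GRAPH" and one: "\<And>z. adj G x z \<longleftrightarrow> z = y"
  shows "G \<notin> EULERIAN"
proof
  assume "G \<in> EULERIAN"
  then obtain w where ne: "w \<noteq> []" and hl: "hd w = last w"
    and a: "\<forall>i < length w - 1. adj G (w ! i) (w ! Suc i)"
    and d: "distinct (map (\<lambda>i. {w ! i, w ! Suc i}) [0..<length w - 1])"
    and e: "set (map (\<lambda>i. {w ! i, w ! Suc i}) [0..<length w - 1]) = edges G"
    unfolding EULERIAN_def by blast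
  have sym: "\<And>u v. adj G u v = adj G v u" using GRAPH_D(4)[OF G] by blast
  define E where "E i = {w ! i, w ! Suc i}" for i
  have dE: "\<And>i j. i < length w - 1 \<Longrightarrow> j < length w - 1 \<Longrightarrow> E i = E j \<Longrightarrow> i = j"
    using d unfolding E_def by (simp add: distinct_conv_nth) blast
  have "{x, y} \<in> edges G" using one unfolding edges_def by blast
  then have "{x, y} \<in> E ` {0..<length w - 1}" using e unfolding E_def by simp
  then obtain i where i: "i < length w - 1" "E i = {x, y}" by auto
  have Ex: "E j = {x, y}" if "j < length w - 1" "w ! j = x \<or> w ! Suc j = x" for j
    using that a one sym unfolding E_def by (metis insert_commute)
  have w0: "w ! 0 = x \<and> w ! (length w - 1) = x"
  proof -
    have "w ! i = x \<or> w ! Suc i = x"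
    proof -
      have "x \<in> E i" using i by simp
      then show ?thesis unfolding E_def by auto
    qed
    moreover have "i < length w" "Suc i < length w" using i by auto
    ultimately obtain p where p: "p < length w" "w ! p = x" by blast
    show ?thesis
    proof (cases "0 < p \<and> p < length w - 1")
      case True
      have "p - 1 < length w - 1" using True by (meson diff_le_self le_less_trans)
      moreover have "w ! Suc (p - 1) = x" using True p by simp
      ultimately have "E (p - 1) = {x, y}" using Ex[of "p - 1"] by blast
      moreover have "E p = {x, y}" using Ex[of p] True p by simp
      moreover have "p - 1 < length w - 1" using True by (meson diff_le_self le_less_trans)
      ultimately have "p - 1 = p" using dE True by blast
      moreover have "0 < p" using True by blast
      ultimately show ?thesis by linarith
    next
      case False
      have hd0: "hd w = w ! 0" using ne by (simp add: hd_conv_nth)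
      have l0: "last w = w ! (length w - 1)" using ne by (simp add: last_conv_nth)
      from False have "p = 0 \<or> p = length w - 1" using p by linarith
      then show ?thesis using hd0 l0 hl p by auto
    qed
  qed
  have lw: "length w - 1 > 0" using i by simp
  have E0: "E 0 = {x, y}" using Ex[of 0] w0 lw by simp
  have "Suc (length w - 2) = length w - 1" using lw by simp
  then have El: "E (length w - 2) = {x, y}" using Ex[of "length w - 2"] w0 lw by simp
  have "length w - 2 = 0" using dE[of 0 "length w - 2"] E0 El lw by simp
  then have "length w = 2" using lw by simp
  then have "w ! 1 = x" using w0 by simp
  moreover have "adj G (w ! 0) (w ! 1)" using a \<open>length w = 2\<close> by auto
  ultimately show False using w0 GRAPH_D(5)[OF G] by simp
qed



lemma path_adj: "adj (pathG N) u v \<longleftrightarrow> u < N \<and> v < N \<and> (v = Suc u \<or> u = Suc v)"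
  by (simp add: pathG_def)

lemma path_near_fwd: "u + d < N \<Longrightarrow> near (pathG N) d u (u + d)"
proof (induction d)
  case 0 then show ?case by (simp add: pathG_def)
next
  case (Suc d)
  then have "near (pathG N) d u (u + d)" by simp
  moreover have "adj (pathG N) (u + d) (u + Suc d)" using Suc.prems by (simp add: path_adj)
  ultimately show ?case by (rule near_snoc)
qed

lemma path_near_bwd: "u < N \<Longrightarrow> near (pathG N) d u (u - d)"
proof (induction d)
  case 0 then show ?case by (simp add: pathG_def)
next
  case (Suc d)
  then have n: "near (pathG N) d u (u - d)" by simp
  show ?case
  proof (cases "d < u")
    case True
    then have "u - d = Suc (u - Suc d)" by simp
    moreover have "u - d < N" "u - Suc d < N" using Suc.prems by (meson diff_le_self le_less_trans)+
    ultimately have "adj (pathG N) (u - d) (u - Suc d)" by (simp add: path_adj)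
    then show ?thesis using n near_snoc by blast
  next
    case False
    then have "u - Suc d = u - d" by simp
    then show ?thesis using n near_mono[OF n, of "Suc d"] by simp
  qed
qed

lemma path_near_bound: "near (pathG N) d u v \<Longrightarrow> v \<le> u + d \<and> u \<le> v + d"
proof (induction d arbitrary: v)
  case 0 then show ?case by simp
next
  case (Suc d)
  from Suc.prems have "near (pathG N) d u v \<or> (\<exists>w. near (pathG N) d u w \<and> adj (pathG N) w v)" by simp
  then show ?case
  proof (elim disjE exE conjE)
    assume "near (pathG N) d u v" then show ?thesis using Suc.IH by force
  next
    fix w assume "near (pathG N) d u w" "adj (pathG N) w v"
    then show ?thesis using Suc.IH[of w] by (auto simp: path_adj)
  qed
qed

lemma path_GRAPH: assumes "1 \<le> N" shows "pathG N \<in> GRAPH"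
proof -
  have conn: "\<exists>k. near (pathG N) k u v" if "u < N" "v < N" for u v
  proof (cases "u \<le> v")
    case True
    then have "near (pathG N) (v - u) u (u + (v - u))" using that by (intro path_near_fwd) simp
    then show ?thesis using True by auto
  next
    case False
    then have "near (pathG N) (u - v) u (u - (u - v))" using that by (intro path_near_bwd)
    then show ?thesis using False by auto
  qed
  have "0 \<in> verts (pathG N)" using assms by (simp add: pathG_def)
  then have ne: "verts (pathG N) \<noteq> {}" by blast
  show ?thesis unfolding GRAPH_def using conn ne by (auto simp: pathG_def)
qed

lemma path_not_ham_eul: assumes "2 \<le> N" shows "pathG N \<notin> HAMILTONIAN" "pathG N \<notin> EULERIAN"
proof -
  have G: "pathG N \<in> GRAPH" using assms by (intro path_GRAPH) simp
  have one: "\<And>z. adj (pathG N) 0 z \<longleftrightarrow> z = 1" using assms by (auto simp: path_adj)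
  have x: "0 \<in> verts (pathG N)" using assms by (simp add: pathG_def)
  show "pathG N \<notin> HAMILTONIAN" by (rule deg1_not_ham[OF G x one])
  show "pathG N \<notin> EULERIAN" by (rule deg1_not_eul[OF G one])
qed

lemma ham_intro:
  assumes G: "G \<in> GRAPH" and V: "verts G = {..<n}" and n: "3 \<le> n"
    and a: "\<And>i. Suc i < n \<Longrightarrow> adj G i (Suc i)" and l: "adj G (n - 1) 0"
  shows "G \<in> HAMILTONIAN"
proof -
  have "last [0..<n] = n - 1" using n by (simp add: last_upt)
  moreover have "hd [0..<n] = 0" using n by (simp add: hd_upt)
  ultimately have "distinct [0..<n] \<and> 3 \<le> length [0..<n] \<and> set [0..<n] = verts G
     \<and> (\<forall>i < length [0..<n] - 1. adj G ([0..<n] ! i) ([0..<n] ! Suc i)) \<and> adj G (last [0..<n]) (hd [0..<n])"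
    using V n a l by (auto simp: lessThan_atLeast0)
  then show ?thesis unfolding HAMILTONIAN_def using G by blast
qed

lemma cyc_adj_nat: "adj (cycG L) u v \<longleftrightarrow> u < L \<and> v < L \<and> (v = Suc u mod L \<or> u = Suc v mod L)"
proof -
  have "int v = (int u + 1) mod int L \<longleftrightarrow> v = Suc u mod L" for u v
    by (metis of_nat_Suc zmod_int add.commute of_nat_eq_iff)
  then show ?thesis unfolding cycG_def by simp
qed

lemma cyc_ham: "3 \<le> L \<Longrightarrow> cycG L \<in> HAMILTONIAN"
  by (rule ham_intro[OF cyc_GRAPH]) (auto simp: cyc_adj_nat cycG_def)



lemma cyc_eul: assumes L: "3 \<le> L" shows "cycG L \<in> EULERIAN"
proof -
  define w where "w = [0..<L] @ [0]"
  have lw: "length w = Suc L" unfolding w_def by simp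
  have wn: "w ! i = i mod L" if "i < Suc L" for i
  proof (cases "i < L")
    case True then show ?thesis unfolding w_def by (simp add: nth_append)
  next
    case False then have "i = L" using that by simp
    then show ?thesis unfolding w_def by (simp add: nth_append)
  qed
  define e where "e i = {i, Suc i mod L}" for i
  have me: "map (\<lambda>i. {w ! i, w ! Suc i}) [0..<length w - 1] = map e [0..<L]"
  proof -
    have "length w - 1 = L" using lw by simp
    moreover have "map (\<lambda>i. {w ! i, w ! Suc i}) [0..<L] = map e [0..<L]"
    proof (rule map_cong)
      fix i assume "i \<in> set [0..<L]"
      then have "i < Suc L" "Suc i < Suc L" by auto
      then show "{w ! i, w ! Suc i} = e i" unfolding e_def using wn by (metis mod_less not_less_eq)
    qed simp
    ultimately show ?thesis by simp
  qed
  have inj: "inj_on e {..<L}"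
  proof (rule inj_onI)
    fix i j assume i: "i \<in> {..<L}" and j: "j \<in> {..<L}" and ee: "e i = e j"
    show "i = j"
    proof (rule ccontr)
      assume ne: "i \<noteq> j"
      from ee ne have "i = Suc j mod L \<and> Suc i mod L = j" unfolding e_def doubleton_eq_iff by blast
      then have ij: "i = Suc j mod L" "j = Suc i mod L" by (blast, metis)
      show False
      proof (cases "Suc j < L")
        case True
        then have ii: "i = Suc j" using ij(1) by simp
        show False
        proof (cases "Suc i < L")
          case True
          then have "j = Suc i" using ij(2) by simp
          then show False using ii by simp
        next
          case False
          then have "Suc i = L" using i by simp
          then have "j = 0" using ij(2) by simp
          then show False using ii \<open>Suc i = L\<close> L by simp
        qed
      next
        case False
        then have "Suc j = L" using j by simp
        then have "i = 0" using ij(1) by simp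
        then have "j = Suc 0 mod L" using ij(2) by simp
        also have "\<dots> = 1" using L by simp
        finally show False using \<open>Suc j = L\<close> L by simp
      qed
    qed
  qed
  have edges: "edges (cycG L) = e ` {..<L}"
  proof
    show "edges (cycG L) \<subseteq> e ` {..<L}"
    proof
      fix x assume "x \<in> edges (cycG L)"
      then obtain u v where x: "x = {u, v}" and a: "adj (cycG L) u v" unfolding edges_def by blast
      from a have "u < L" "v < L" "v = Suc u mod L \<or> u = Suc v mod L" by (auto simp: cyc_adj_nat)
      then show "x \<in> e ` {..<L}"
      proof (elim conjE disjE)
        assume "u < L" "v = Suc u mod L" then show ?thesis unfolding x e_def by blast
      next
        assume "v < L" "u = Suc v mod L"
        then have "x = e v" unfolding x e_def by (simp add: insert_commute)
        then show ?thesis using \<open>v < L\<close> by blast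
      qed
    qed
  next
    show "e ` {..<L} \<subseteq> edges (cycG L)"
    proof
      fix x assume "x \<in> e ` {..<L}"
      then obtain i where i: "i < L" and x: "x = {i, Suc i mod L}" unfolding e_def by blast
      have "adj (cycG L) i (Suc i mod L)" using i by (simp add: cyc_adj_nat)
      then show "x \<in> edges (cycG L)" unfolding edges_def x by blast
    qed
  qed
  have "w \<noteq> []" "hd w = last w" "set w \<subseteq> verts (cycG L)" unfolding w_def using L by (auto simp: cycG_def hd_append)
  moreover have "\<forall>i < length w - 1. adj (cycG L) (w ! i) (w ! Suc i)"
    using wn lw by (auto simp: cyc_adj_nat)
  moreover have "distinct (map (\<lambda>i. {w ! i, w ! Suc i}) [0..<length w - 1])"
    unfolding me using inj by (simp add: distinct_map lessThan_atLeast0)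
  moreover have "set (map (\<lambda>i. {w ! i, w ! Suc i}) [0..<length w - 1]) = edges (cycG L)"
    unfolding me edges by (simp add: lessThan_atLeast0)
  ultimately show ?thesis unfolding EULERIAN_def using cyc_GRAPH[OF L] by blast
qed



fun bin :: "nat \<Rightarrow> nat \<Rightarrow> bool list" where
  "bin 0 x = []"
| "bin (Suc B) x = odd x # bin B (x div 2)"

lemma bin_len[simp]: "length (bin B x) = B"
  by (induction B arbitrary: x) auto

lemma bin_inj: "x < 2 ^ B \<Longrightarrow> y < 2 ^ B \<Longrightarrow> bin B x = bin B y \<Longrightarrow> x = y"
proof (induction B arbitrary: x y)
  case 0 then show ?case by simp
next
  case (Suc B)
  then have "odd x = odd y" "bin B (x div 2) = bin B (y div 2)" by auto
  moreover have "x div 2 < 2 ^ B" "y div 2 < 2 ^ B" using Suc.prems by auto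
  ultimately have "x div 2 = y div 2" "x mod 2 = y mod 2" using Suc.IH by (auto simp: odd_iff_mod_2_eq_one)
  then show ?case by (metis div_mult_mod_eq)
qed

locale win =
  fixes N L i c Pd B :: nat and \<kappa>G :: "nat \<Rightarrow> bool list"
  assumes Pd3: "3 \<le> Pd" and PdB: "Pd \<le> 2 ^ B" and Ldvd: "Pd dvd L" and idvd: "Pd dvd i"
    and Lbig: "2 * c + 6 < L" and ibig: "c + 3 \<le> i" and Nbig: "i + L + c + 3 < N"
    and win: "\<And>x. x \<le> c + 2 \<Longrightarrow> \<kappa>G (i + x) = \<kappa>G (i + L + x) \<and> \<kappa>G (i - x) = \<kappa>G (i + L - x)"
begin

definition idP :: "nat \<Rightarrow> bool list" where "idP n = bin B (n mod Pd)"
definition \<kappa>C :: "nat \<Rightarrow> bool list" where "\<kappa>C k = \<kappa>G (i + k)"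
definition sr :: "int \<Rightarrow> int" where "sr x = (if x \<le> int L div 2 then x else x - int L)"
definition Fk :: "nat \<Rightarrow> nat \<Rightarrow> nat" where "Fk k u = nat (int i + int k + sr ((int u - int k) mod int L))"

lemma Fk_z:
  assumes k: "k < L" and z: "\<bar>z\<bar> \<le> int c + 2"
  shows "Fk k (nat ((int k + z) mod int L)) = nat (int i + int k + z)"
proof -
  have L0: "0 < int L" using Lbig by simp
  have "int (nat ((int k + z) mod int L)) = (int k + z) mod int L" using L0 by simp
  then have "(int (nat ((int k + z) mod int L)) - int k) mod int L = z mod int L"
    by (simp add: mod_diff_left_eq)
  moreover have "sr (z mod int L) = z"
  proof (cases "0 \<le> z")
    case True
    then have "z mod int L = z" using z Lbig by (intro mod_pos_pos_trivial) auto
    then show ?thesis unfolding sr_def using z Lbig True by auto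
  next
    case False
    have "z mod int L = (z + int L) mod int L" by simp
    also have "\<dots> = z + int L" using z Lbig False by (intro mod_pos_pos_trivial) auto
    finally have "z mod int L = z + int L" .
    then show ?thesis unfolding sr_def using z Lbig False by auto
  qed
  ultimately show ?thesis unfolding Fk_def by simp
qed

lemma cyc_nbr: "u < L \<Longrightarrow> adj (cycG L) u x \<longleftrightarrow> x = nat ((int u + 1) mod int L) \<or> x = nat ((int u - 1) mod int L)"
proof -
  assume u: "u < L"
  have L0: "0 < int L" using Lbig by simp
  have a: "nat ((int u + 1) mod int L) < L" "nat ((int u - 1) mod int L) < L" using L0 by (simp_all add: nat_less_iff)
  show ?thesis unfolding cyc_adj using u a L0 by auto
qed

lemma loc:
  assumes k: "k < L" and z: "\<bar>z\<bar> \<le> int c + 1"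
  shows "loccov (cycG L) (pathG N) idP idP \<kappa>C \<kappa>G (Fk k) (nat ((int k + z) mod int L))"
proof -
  define u where "u = nat ((int k + z) mod int L)"
  define g where "g = int i + int k + z"
  have L0: "0 < int L" using Lbig by simp
  have iu: "int u = (int k + z) mod int L" unfolding u_def using L0 by simp
  have uL: "u < L" unfolding u_def using L0 by (simp add: nat_less_iff)
  have Fu: "Fk k u = nat g" unfolding u_def g_def using Fk_z[OF k] z by simp
  have g1: "2 \<le> g" unfolding g_def using z ibig by linarith
  have g2: "g + 1 < int N" unfolding g_def using z Nbig k by linarith
  have nb: "\<And>x. adj (cycG L) u x \<longleftrightarrow> x = nat ((int k + (z + 1)) mod int L) \<or> x = nat ((int k + (z - 1)) mod int L)"
  proof -
    fix x
    have "(int u + 1) mod int L = (int k + (z + 1)) mod int L" unfolding iu by (simp add: mod_add_left_eq add.assoc)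
    moreover have "(int u - 1) mod int L = (int k + (z - 1)) mod int L" unfolding iu by (simp add: mod_diff_left_eq algebra_simps)
    ultimately show "adj (cycG L) u x \<longleftrightarrow> x = nat ((int k + (z + 1)) mod int L) \<or> x = nat ((int k + (z - 1)) mod int L)"
      using cyc_nbr[OF uL] by simp
  qed
  have Fp: "Fk k (nat ((int k + (z + 1)) mod int L)) = nat (g + 1)"
    using Fk_z[OF k, of "z+1"] z unfolding g_def by (simp add: algebra_simps)
  have Fm: "Fk k (nat ((int k + (z - 1)) mod int L)) = nat (g - 1)"
    using Fk_z[OF k, of "z-1"] z unfolding g_def by (simp add: algebra_simps)
  have pa: "\<And>y. adj (pathG N) (nat g) y \<longleftrightarrow> y = nat (g + 1) \<or> y = nat (g - 1)"
    using g1 g2 by (auto simp: path_adj)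
  have idu: "idP u = idP (nat g)"
  proof -
    have "int (u mod Pd) = ((int k + z) mod int L) mod int Pd" using iu by (simp add: zmod_int)
    also have "\<dots> = (int k + z) mod int Pd" using Ldvd by (simp add: mod_mod_cancel)
    also have "\<dots> = (int i + (int k + z)) mod int Pd" using idvd
      by (metis mod_add_left_eq add_0 dvd_imp_mod_0 of_nat_dvd_iff)
    also have "\<dots> = int (nat g mod Pd)" using g1 unfolding g_def by (simp add: zmod_int add.assoc)
    finally show ?thesis unfolding idP_def by simp
  qed
  have ku: "\<kappa>C u = \<kappa>G (nat g)"
  proof -
    consider (a) "0 \<le> int k + z" "int k + z < int L" | (b) "int L \<le> int k + z" | (c) "int k + z < 0" by linarith
    then show ?thesis
    proof cases
      case a
      then have "int u = int k + z" using iu by simp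
      then have "nat g = i + u" unfolding g_def by simp
      then show ?thesis unfolding \<kappa>C_def by simp
    next
      case b
      have "(int k + z - int L) mod int L = int k + z - int L" using b k z Lbig by (intro mod_pos_pos_trivial) auto
      moreover have "(int k + z - int L) mod int L = (int k + z) mod int L" by simp
      ultimately have "int u = int k + z - int L" using iu by simp
      then have x: "u \<le> c + 2" using k z by linarith
      have "nat g = i + L + u" using \<open>int u = int k + z - int L\<close> unfolding g_def by simp
      then show ?thesis unfolding \<kappa>C_def using win[OF x] by simp
    next
      case c
      have "(int k + z + int L) mod int L = int k + z + int L" using c k z Lbig by (intro mod_pos_pos_trivial) auto
      moreover have "(int k + z + int L) mod int L = (int k + z) mod int L" by simp
      ultimately have "int u = int k + z + int L" using iu by simp
      define x where "x = nat (- (int k + z))"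
      have x: "x \<le> c + 2" unfolding x_def using c z by linarith
      have "i + u = i + L - x" using \<open>int u = int k + z + int L\<close> c unfolding x_def by linarith
      moreover have "nat g = i - x" unfolding g_def x_def using c z ibig by linarith
      ultimately show ?thesis unfolding \<kappa>C_def using win[OF x] by simp
    qed
  qed
  have "loccov (cycG L) (pathG N) idP idP \<kappa>C \<kappa>G (Fk k) u"
    unfolding loccov_def
  proof (intro conjI allI impI)
    show "lab (cycG L) u = lab (pathG N) (Fk k u)" by (simp add: cycG_def pathG_def)
    show "idP u = idP (Fk k u)" using idu Fu by simp
    show "\<kappa>C u = \<kappa>G (Fk k u)" using ku Fu by simp
    fix x assume "adj (cycG L) u x"
    then show "adj (pathG N) (Fk k u) (Fk k x)" using nb Fp Fm Fu pa by auto
  next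
    fix y assume "adj (pathG N) (Fk k u) y"
    then show "\<exists>x. adj (cycG L) u x \<and> Fk k x = y" using nb Fp Fm Fu pa by auto
  next
    show "inj_on (Fk k) {x. adj (cycG L) u x}"
    proof (rule inj_onI)
      fix x x' assume "x \<in> {x. adj (cycG L) u x}" "x' \<in> {x. adj (cycG L) u x}" "Fk k x = Fk k x'"
      moreover have "nat (g + 1) \<noteq> nat (g - 1)" using g1 by simp
      ultimately show "x = x'" using nb Fp Fm by auto
    qed
  qed
  then show ?thesis unfolding u_def .
qed

end



lemma ball_sum:
  assumes "\<forall>v. lab G v = []" "\<forall>v. length (idf v) = B"
  shows "(\<Sum>v\<in>S. 1 + length (lab G v) + length (idf v)) = card S * (1 + B)"
  using assms by simp

lemma cert_transfer:
  assumes cb: "cert_bounded r p G idG \<kappa>G" and H: "H \<in> GRAPH"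
    and lG: "\<forall>v. lab G v = []" and lH: "\<forall>v. lab H v = []"
    and iG: "\<forall>v. length (idG v) = B" and iH: "\<forall>v. length (idH v) = B"
    and corr: "\<forall>u\<in>verts H. \<exists>w\<in>verts G. \<kappa>H u = \<kappa>G w \<and> card {v. near G r w v} \<le> card {v. near H r u v}"
  shows "cert_bounded r p H idH \<kappa>H"
  unfolding cert_bounded_def
proof
  fix u assume u: "u \<in> verts H"
  then obtain w where w: "w \<in> verts G" "\<kappa>H u = \<kappa>G w" "card {v. near G r w v} \<le> card {v. near H r u v}"
    using corr by blast
  have "length (\<kappa>H u) \<le> poly p (card {v. near G r w v} * (1 + B))"
    using cb w unfolding cert_bounded_def ball_sum[OF lG iG] by simp
  also have "\<dots> \<le> poly p (card {v. near H r u v} * (1 + B))"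
    using w(3) by (intro poly_mono_nat mult_le_mono1)
  finally show "length (\<kappa>H u) \<le> poly p (\<Sum>v\<in>{v. near H r u v}. 1 + length (lab H v) + length (idH v))"
    unfolding ball_sum[OF lH iH] .
qed

context win begin

lemma Qf_win:
  assumes k: "k < L" and t: "t \<le> c"
  shows "Qf (cycG L) (pathG N) idP idP \<kappa>C \<kappa>G t k (i + k)"
  unfolding Qf_def
proof (intro conjI exI[of _ "Fk k"] allI impI)
  show "k \<in> verts (cycG L)" using k by (simp add: cycG_def)
  show "Fk k k = i + k" using Fk_z[OF k, of 0] k by simp
  fix u assume "near (cycG L) (Suc t) k u"
  then obtain z where z: "\<bar>z\<bar> \<le> int (Suc t)" "int u = (int k + z) mod int L" using cyc_near_z by blast
  then have "u = nat ((int k + z) mod int L)" by simp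
  moreover have "\<bar>z\<bar> \<le> int c + 1" using z t by simp
  ultimately show "loccov (cycG L) (pathG N) idP idP \<kappa>C \<kappa>G (Fk k) u" using loc[OF k] by simp
qed

lemma lu_path: assumes "2 * r' < Pd" shows "locally_unique r' (pathG N) idP"
  unfolding locally_unique_def
proof (intro ballI impI, elim conjE)
  fix u v assume uv: "u \<noteq> v" "near (pathG N) (2 * r') u v"
  then have b: "v \<le> u + 2 * r'" "u \<le> v + 2 * r'" using path_near_bound by blast+
  show "idP u \<noteq> idP v"
  proof
    assume "idP u = idP v"
    then have "u mod Pd = v mod Pd" unfolding idP_def using PdB Pd3
      by (metis bin_inj mod_less_divisor order_less_le_trans le_neq_implies_less less_imp_le_nat not_less zero_less_numeral numeral_le_iff less_le_trans)
    then have "Pd dvd (if u \<le> v then v - u else u - v)"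
      by (metis mod_eq_dvd_iff_nat le_cases not_le less_or_eq_imp_le)
    moreover have "(if u \<le> v then v - u else u - v) < Pd" "0 < (if u \<le> v then v - u else u - v)"
      using b assms uv by auto
    ultimately show False using nat_dvd_not_less by blast
  qed
qed

lemma lu_cyc: assumes "2 * r' < Pd" shows "locally_unique r' (cycG L) idP"
  unfolding locally_unique_def
proof (intro ballI impI, elim conjE)
  fix u v assume uV: "u \<in> verts (cycG L)" and uv: "u \<noteq> v" "near (cycG L) (2 * r') u v"
  obtain z where z: "\<bar>z\<bar> \<le> int (2 * r')" "int v = (int u + z) mod int L" using cyc_near_z[OF uv(2)] by blast
  have uL: "u < L" using uV by (simp add: cycG_def)
  show "idP u \<noteq> idP v"
  proof
    assume "idP u = idP v"
    then have "u mod Pd = v mod Pd" unfolding idP_def using PdB Pd3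
      by (metis bin_inj mod_less_divisor order_less_le_trans le_neq_implies_less less_imp_le_nat not_less zero_less_numeral numeral_le_iff less_le_trans)
    then have "int u mod int Pd = int v mod int Pd" by (metis zmod_int)
    also have "\<dots> = (int u + z) mod int Pd" using z(2) Ldvd by (simp add: mod_mod_cancel)
    finally have "int Pd dvd z" by (simp add: mod_eq_dvd_iff)
    moreover have "\<bar>z\<bar> < int Pd" using z assms by linarith
    ultimately have "z = 0"
    proof (intro ccontr[of "z = 0"])
      assume d: "int Pd dvd z" and l: "\<bar>z\<bar> < int Pd" and nz: "z \<noteq> 0"
      have "\<bar>int Pd\<bar> \<le> \<bar>z\<bar>" by (rule dvd_imp_le_int[OF nz d])
      then show False using l by simp
    qed
    then have "int v = int u" using z(2) uL by simp
    then show False using uv by simp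
  qed
qed

lemma card_ball_path: "card {v. near (pathG N) r w v} \<le> 2 * r + 1"
proof -
  have "{v. near (pathG N) r w v} \<subseteq> {w - r..w + r}" using path_near_bound by fastforce
  then have "card {v. near (pathG N) r w v} \<le> card {w - r..w + r}" by (intro card_mono) auto
  also have "\<dots> \<le> 2 * r + 1" by simp
  finally show ?thesis .
qed

lemma card_ball_cyc:
  assumes k: "k < L" and r: "2 * r < L"
  shows "2 * r + 1 \<le> card {v. near (cycG L) r k v}"
proof -
  define f where "f e = nat ((int k - int r + int e) mod int L)" for e
  have L0: "0 < int L" using r by simp
  have sub: "f ` {0..2*r} \<subseteq> {v. near (cycG L) r k v}"
  proof
    fix x assume "x \<in> f ` {0..2*r}"
    then obtain e where e: "e \<le> 2 * r" "x = f e" by auto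
    show "x \<in> {v. near (cycG L) r k v}"
    proof (cases "r \<le> e")
      case True
      have "f e = nat ((int k + int (e - r)) mod int L)" unfolding f_def using True by (simp add: of_nat_diff algebra_simps)
      moreover have "near (cycG L) (e - r) k (nat ((int k + int (e - r)) mod int L))" by (rule cyc_near_fwd[OF k])
      ultimately show ?thesis using e near_mono[of "cycG L" "e - r" k _ r] by auto
    next
      case False
      have "f e = nat ((int k - int (r - e)) mod int L)" unfolding f_def using False by (simp add: of_nat_diff algebra_simps)
      moreover have "near (cycG L) (r - e) k (nat ((int k - int (r - e)) mod int L))" by (rule cyc_near_bwd[OF k])
      ultimately show ?thesis using e near_mono[of "cycG L" "r - e" k _ r] by auto
    qed
  qed
  have inj: "inj_on f {0..2*r}"
  proof (rule inj_onI)
    fix e e' assume e: "e \<in> {0..2*r}" "e' \<in> {0..2*r}" "f e = f e'"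
    then have "(int k - int r + int e) mod int L = (int k - int r + int e') mod int L"
      unfolding f_def using L0 by (simp add: nat_eq_iff2)
    then have "int L dvd (int e - int e')" by (simp add: mod_eq_dvd_iff algebra_simps)
    moreover have "\<bar>int e - int e'\<bar> < int L" using e r by auto
    ultimately have "int e - int e' = 0"
    proof (intro ccontr[of "int e - int e' = 0"])
      assume d: "int L dvd (int e - int e')" and l: "\<bar>int e - int e'\<bar> < int L" and nz: "int e - int e' \<noteq> 0"
      have "\<bar>int L\<bar> \<le> \<bar>int e - int e'\<bar>" by (rule dvd_imp_le_int[OF nz d])
      then show False using l by simp
    qed
    then show "e = e'" by simp
  qed
  have fin: "finite {v. near (cycG L) r k v}"
  proof (rule finite_subset[of _ "verts (cycG L)"])
    have G: "cycG L \<in> GRAPH" using Lbig by (intro cyc_GRAPH) simp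
    show "{v. near (cycG L) r k v} \<subseteq> verts (cycG L)" using near_end[OF G] by blast
    show "finite (verts (cycG L))" by (simp add: cycG_def)
  qed
  have "card (f ` {0..2*r}) = 2 * r + 1" using inj by (simp add: card_image)
  then show ?thesis using card_mono[OF fin sub] by simp
qed

end



lemma lu_path0:
  assumes Pd3: "3 \<le> Pd" and PdB: "Pd \<le> 2 ^ B" and r: "2 * r' < Pd"
  shows "locally_unique r' (pathG N) (\<lambda>n. bin B (n mod Pd))"
  unfolding locally_unique_def
proof (intro ballI impI, elim conjE)
  fix u v assume uv: "u \<noteq> v" "near (pathG N) (2 * r') u v"
  then have b: "v \<le> u + 2 * r'" "u \<le> v + 2 * r'" using path_near_bound by blast+
  show "bin B (u mod Pd) \<noteq> bin B (v mod Pd)"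
  proof
    assume "bin B (u mod Pd) = bin B (v mod Pd)"
    then have "u mod Pd = v mod Pd" using PdB Pd3
      by (metis bin_inj mod_less_divisor order_less_le_trans le_neq_implies_less less_imp_le_nat not_less zero_less_numeral numeral_le_iff less_le_trans)
    then have "Pd dvd (if u \<le> v then v - u else u - v)"
      by (metis mod_eq_dvd_iff_nat le_cases not_le less_or_eq_imp_le)
    moreover have "(if u \<le> v then v - u else u - v) < Pd" "0 < (if u \<le> v then v - u else u - v)"
      using b r uv by auto
    ultimately show False using nat_dvd_not_less by blast
  qed
qed

lemma card_ball_path0: "card {v. near (pathG N) r w v} \<le> 2 * r + 1"
proof -
  have "{v. near (pathG N) r w v} \<subseteq> {w - r..w + r}" using path_near_bound by fastforce
  then have "card {v. near (pathG N) r w v} \<le> card {w - r..w + r}" by (intro card_mono) auto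
  also have "\<dots> \<le> 2 * r + 1" by simp
  finally show ?thesis .
qed

lemma pigeon:
  assumes "finite S" "f ` A \<subseteq> S" "card S < card A" "finite A"
  shows "\<exists>x\<in>A. \<exists>y\<in>A. x \<noteq> y \<and> f x = f y"
proof (rule ccontr)
  assume "\<not> ?thesis"
  then have "inj_on f A" unfolding inj_on_def by blast
  then have "card A \<le> card S" using card_inj_on_le assms by blast
  then show False using assms by simp
qed

lemma path_fool:
  assumes NLP: "P \<in> NLP" and inP: "\<And>N. 2 \<le> N \<Longrightarrow> pathG N \<in> P"
    and notP: "\<And>L. 3 \<le> L \<Longrightarrow> cycG L \<notin> P"
  shows False
proof -
  obtain M r_id r p where lp: "local_poly M" and rid: "r_id \<ge> 1" and r1: "r \<ge> 1"
    and ch: "\<forall>G\<in>GRAPH. \<forall>idf. locally_unique r_id G idf \<longrightarrow>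
        (G \<in> P \<longleftrightarrow> (\<exists>\<kappa>. cert_bounded r p G idf \<kappa> \<and> accepts M G idf \<kappa>))"
    using NLP unfolding NLP_def by blast
  obtain c q where lpc: "\<forall>G\<in>GRAPH. \<forall>idf \<kappa>. locally_unique 1 G idf \<longrightarrow>
     (\<forall>u\<in>verts G. fst (exec M G idf \<kappa> c u))"
    using lp unfolding local_poly_def by blast
  define Pd where "Pd = 2 * r_id + 1"
  define B where "B = Pd"
  have Pd3: "3 \<le> Pd" using rid unfolding Pd_def by simp
  have PdB: "Pd \<le> 2 ^ B" unfolding B_def by (simp add: less_imp_le)
  define idP where "idP n = bin B (n mod Pd)" for n
  define CB where "CB = poly p ((2 * r + 1) * (1 + B))"
  define wnd where "wnd \<kappa> w = map (\<lambda>x. \<kappa> (w + x)) [0..<c+3] @ map (\<lambda>x. \<kappa> (w - x)) [0..<c+3]"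
    for \<kappa> :: "nat \<Rightarrow> bool list" and w
  define S where "S = {xs. set xs \<subseteq> {b::bool list. length b \<le> CB} \<and> length xs = 2 * (c + 3)}"
  have finS: "finite S" unfolding S_def
    by (rule finite_lists_length_eq) (rule finite_subset[OF _ finite_lists_length_le[of "UNIV::bool set" CB]], auto)
  define K where "K = card S"
  define Sp where "Sp = Pd * (2 * c + 2 * r + 7)"
  have Spb: "2 * c + 2 * r + 7 \<le> Sp" unfolding Sp_def using Pd3 by simp
  define N where "N = Sp * (K + 3)"
  have "Sp \<le> N" unfolding N_def by simp
  then have N2: "2 \<le> N" using Spb by linarith
  define G where "G = pathG N"
  have GG: "G \<in> GRAPH" unfolding G_def using N2 by (intro path_GRAPH) simp
  have luG: "locally_unique r_id G idP" unfolding G_def idP_def using Pd3 PdB by (intro lu_path0) (auto simp: Pd_def)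
  have lu1: "locally_unique 1 G idP" unfolding G_def idP_def using Pd3 PdB by (intro lu_path0) (auto simp: Pd_def)
  obtain \<kappa> where cb: "cert_bounded r p G idP \<kappa>" and acc: "accepts M G idP \<kappa>"
    using ch GG luG inP[OF N2] unfolding G_def by blast
  have stopG: "\<forall>w\<in>verts G. fst (exec M G idP \<kappa> c w)" using lpc GG lu1 by blast
  have kb: "length (\<kappa> w) \<le> CB" if "w < N" for w
  proof -
    have "length (\<kappa> w) \<le> poly p (\<Sum>v\<in>{v. near G r w v}. 1 + length (lab G v) + length (idP v))"
      using cb that unfolding cert_bounded_def G_def by (simp add: pathG_def)
    also have "\<dots> = poly p (card {v. near G r w v} * (1 + B))"
      by (subst ball_sum[of G idP B]) (auto simp: G_def pathG_def idP_def)
    also have "\<dots> \<le> CB" unfolding CB_def G_def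
      by (intro poly_mono_nat mult_le_mono1 card_ball_path0)
    finally show ?thesis .
  qed
  define pos where "pos t = Sp * (t + 1)" for t
  have posN: "pos t + Sp \<le> N - Sp" if "t \<le> K" for t
  proof -
    have "Sp * (t + 1) + Sp = Sp * (t + 2)" by (simp add: algebra_simps)
    also have "\<dots> \<le> Sp * (K + 2)" using that by simp
    also have "\<dots> = N - Sp" unfolding N_def by (simp add: algebra_simps)
    finally show ?thesis unfolding pos_def .
  qed
  have wS: "wnd \<kappa> (pos t) \<in> S" if "t \<le> K" for t
  proof -
    have "pos t + (c + 3) < N" using posN[OF that] Spb by linarith
    then have "\<And>x. x < c + 3 \<Longrightarrow> length (\<kappa> (pos t + x)) \<le> CB" "\<And>x. x < c + 3 \<Longrightarrow> length (\<kappa> (pos t - x)) \<le> CB"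
      using kb by auto
    then show ?thesis unfolding S_def wnd_def by auto
  qed
  obtain t t' where tt: "t < t'" "t' \<le> K" "wnd \<kappa> (pos t) = wnd \<kappa> (pos t')"
  proof -
    have "\<exists>x\<in>{0..K}. \<exists>y\<in>{0..K}. x \<noteq> y \<and> wnd \<kappa> (pos x) = wnd \<kappa> (pos y)"
      by (rule pigeon[OF finS]) (use wS K_def in auto)
    then show ?thesis using that by (metis atLeastAtMost_iff linorder_neqE_nat)
  qed
  define i where "i = pos t"
  define L where "L = Sp * (t' - t)"
  have jL: "pos t' = i + L"
  proof -
    have "t' + 1 = (t + 1) + (t' - t)" using tt by simp
    then have "Sp * (t' + 1) = Sp * (t + 1) + Sp * (t' - t)" by (metis add_mult_distrib2)
    then show ?thesis unfolding i_def L_def pos_def .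
  qed
  have "1 \<le> t' - t" using tt by simp
  then have LSp: "Sp \<le> L" unfolding L_def by (metis mult.right_neutral mult_le_mono2)
  have wins: "\<kappa> (i + x) = \<kappa> (i + L + x) \<and> \<kappa> (i - x) = \<kappa> (i + L - x)" if "x \<le> c + 2" for x
  proof -
    have "wnd \<kappa> i ! x = wnd \<kappa> (i + L) ! x" "wnd \<kappa> i ! (c + 3 + x) = wnd \<kappa> (i + L) ! (c + 3 + x)"
      using tt(3) jL unfolding i_def by simp_all
    then show ?thesis using that unfolding wnd_def by (simp_all add: nth_append)
  qed
  interpret W: win N L i c Pd B \<kappa>
  proof
    show "3 \<le> Pd" by fact
    show "Pd \<le> 2 ^ B" by fact
    show "Pd dvd L" unfolding L_def Sp_def by simp
    show "Pd dvd i" unfolding i_def pos_def Sp_def by simp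
    show "2 * c + 6 < L" using LSp Spb by linarith
    show "c + 3 \<le> i" unfolding i_def pos_def using Spb by (simp add: add_mult_distrib2)
    show "i + L + c + 3 < N" using jL posN[OF tt(2)] Spb by linarith
    show "\<And>x. x \<le> c + 2 \<Longrightarrow> \<kappa> (i + x) = \<kappa> (i + L + x) \<and> \<kappa> (i - x) = \<kappa> (i + L - x)" by (rule wins)
  qed
  have idPW: "W.idP = idP" unfolding W.idP_def idP_def by (rule ext) simp
  define H where "H = cycG L"
  have L3: "3 \<le> L" using LSp Spb by linarith
  have HG: "H \<in> GRAPH" unfolding H_def by (rule cyc_GRAPH[OF L3])
  have luH: "locally_unique r_id H idP" unfolding H_def idPW[symmetric] by (rule W.lu_cyc) (simp add: Pd_def)
  have cbH: "cert_bounded r p H idP W.\<kappa>C"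
  proof (rule cert_transfer[OF cb HG])
    show "\<forall>v. lab G v = []" "\<forall>v. lab H v = []" by (simp_all add: G_def H_def pathG_def cycG_def)
    show "\<forall>v. length (idP v) = B" "\<forall>v. length (idP v) = B" by (simp_all add: idP_def)
    show "\<forall>u\<in>verts H. \<exists>w\<in>verts G. W.\<kappa>C u = \<kappa> w \<and> card {v. near G r w v} \<le> card {v. near H r u v}"
    proof
      fix u assume u: "u \<in> verts H"
      then have uL: "u < L" by (simp add: H_def cycG_def)
      have "i + u \<in> verts G" using uL W.Nbig by (simp add: G_def pathG_def)
      moreover have "card {v. near G r (i + u) v} \<le> card {v. near H r u v}"
        using card_ball_path0[of N r "i + u"] W.card_ball_cyc[OF uL, of r] LSp Spb unfolding G_def H_def by linarith
      ultimately show "\<exists>w\<in>verts G. W.\<kappa>C u = \<kappa> w \<and> card {v. near G r w v} \<le> card {v. near H r u v}"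
        unfolding W.\<kappa>C_def by blast
    qed
  qed
  have accH: "accepts M H idP W.\<kappa>C"
  proof (rule accepts_transfer[OF acc stopG])
    show "\<forall>v\<in>verts H. \<exists>w\<in>verts G. \<forall>t\<le>c. exec M H idP W.\<kappa>C t v = exec M G idP \<kappa> t w"
    proof
      fix v assume v: "v \<in> verts H"
      then have vL: "v < L" by (simp add: H_def cycG_def)
      have "i + v \<in> verts G" using vL W.Nbig by (simp add: G_def pathG_def)
      moreover have "\<forall>t\<le>c. exec M H idP W.\<kappa>C t v = exec M G idP \<kappa> t (i + v)"
      proof (intro allI impI)
        fix t assume "t \<le> c"
        then have "Qf (cycG L) (pathG N) idP idP W.\<kappa>C \<kappa> t v (i + v)" using W.Qf_win[OF vL] idPW by simp
        then show "exec M H idP W.\<kappa>C t v = exec M G idP \<kappa> t (i + v)"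
          using exec_loccov[OF GG HG lu1] unfolding G_def H_def by blast
      qed
      ultimately show "\<exists>w\<in>verts G. \<forall>t\<le>c. exec M H idP W.\<kappa>C t v = exec M G idP \<kappa> t w" by blast
    qed
  qed
  have "H \<in> P" using ch HG luH cbH accH by blast
  then show False using notP[OF L3] unfolding H_def by blast
qed



definition chordG :: "nat \<Rightarrow> lgraph" where
  "chordG m = \<lparr>verts = {..<2*m}, adj = (\<lambda>u v. adj (cycG (2*m)) u v \<or> (u = 0 \<and> v = m) \<or> (u = m \<and> v = 0)),
     lab = (\<lambda>_. [])\<rparr>"

definition dblG :: "nat \<Rightarrow> lgraph" where
  "dblG m = \<lparr>verts = {..<4*m}, adj = (\<lambda>u v. u < 4*m \<and> v < 4*m \<and>
     ((u div (2*m) = v div (2*m) \<and> adj (cycG (2*m)) (u mod (2*m)) (v mod (2*m)))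
     \<or> (u div (2*m) \<noteq> v div (2*m) \<and> ((u mod (2*m) = 0 \<and> v mod (2*m) = m) \<or> (u mod (2*m) = m \<and> v mod (2*m) = 0))))),
     lab = (\<lambda>_. [])\<rparr>"

lemma near_trans: "near G a u x \<Longrightarrow> near G b x y \<Longrightarrow> near G (a + b) u y"
proof (induction b arbitrary: y)
  case 0 then show ?case by simp
next
  case (Suc b)
  from Suc.prems(2) have "near G b x y \<or> (\<exists>w. near G b x w \<and> adj G w y)" by simp
  then show ?case
  proof (elim disjE exE conjE)
    assume "near G b x y" then show ?thesis using Suc near_mono[of G "a + b" u y "a + Suc b"] by simp
  next
    fix w assume "near G b x w" "adj G w y"
    then show ?thesis using Suc by (metis add_Suc_right near_snoc)
  qed
qed

lemma near_hom:
  assumes "near G k u v" and "\<And>a b. adj G a b \<Longrightarrow> adj G' (f a) (f b)" and "\<And>a. a \<in> verts G \<Longrightarrow> f a \<in> verts G'"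
  shows "near G' k (f u) (f v)"
  using assms(1)
proof (induction k arbitrary: v)
  case 0 then show ?case using assms(3) by simp
next
  case (Suc k)
  from Suc.prems have "near G k u v \<or> (\<exists>w. near G k u w \<and> adj G w v)" by simp
  then show ?case
  proof (elim disjE exE conjE)
    assume "near G k u v" then show ?thesis using Suc.IH by simp
  next
    fix w assume "near G k u w" "adj G w v"
    then show ?thesis using Suc.IH assms(2) by (meson near_snoc)
  qed
qed

lemma cyc_conn: "u < L \<Longrightarrow> v < L \<Longrightarrow> \<exists>k. near (cycG L) k u v"
proof -
  assume that: "u < L" "v < L"
  have "(int u + int ((v + L - u) mod L)) mod int L = int v"
  proof -
    have "int ((v + L - u) mod L) = (int v + int L - int u) mod int L"
      using that by (simp add: zmod_int of_nat_diff)
    then have "(int u + int ((v + L - u) mod L)) mod int L = (int u + (int v + int L - int u)) mod int L"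
      by (simp add: mod_add_right_eq)
    also have "\<dots> = int v" using that by simp
    finally show ?thesis .
  qed
  then have "nat ((int u + int ((v + L - u) mod L)) mod int L) = v" by simp
  then show ?thesis using cyc_near_fwd[OF that(1)] by metis
qed

lemma verts_cyc[simp]: "verts (cycG L) = {..<L}" by (simp add: cycG_def)
lemma verts_chord[simp]: "verts (chordG m) = {..<2*m}" by (simp add: chordG_def)
lemma verts_dbl[simp]: "verts (dblG m) = {..<4*m}" by (simp add: dblG_def)
lemma adj_chord: "adj (chordG m) u v \<longleftrightarrow> adj (cycG (2*m)) u v \<or> (u = 0 \<and> v = m) \<or> (u = m \<and> v = 0)"
  by (simp add: chordG_def)

lemma chord_GRAPH: assumes m: "2 \<le> m" shows "chordG m \<in> GRAPH"
proof -
  have cG: "cycG (2*m) \<in> GRAPH" using m by (intro cyc_GRAPH) simp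
  have conn: "\<exists>k. near (chordG m) k u v" if uv: "u < 2*m" "v < 2*m" for u v
  proof -
    obtain k where k: "near (cycG (2*m)) k u v" using cyc_conn[OF uv] by blast
    have "near (chordG m) k (id u) (id v)"
    proof (rule near_hom[OF k])
      fix a b assume "adj (cycG (2 * m)) a b" then show "adj (chordG m) (id a) (id b)" unfolding adj_chord by simp
    next
      fix a assume "a \<in> verts (cycG (2 * m))" then show "id a \<in> verts (chordG m)" by simp
    qed
    then show ?thesis by auto
  qed
  have "0 \<in> verts (chordG m)" using m by (simp add: chordG_def)
  then have ne: "verts (chordG m) \<noteq> {}" by blast
  have irr: "\<not> adj (chordG m) u u" for u using GRAPH_D(5)[OF cG] m unfolding adj_chord by auto
  have sym: "adj (chordG m) u v = adj (chordG m) v u" for u v using GRAPH_D(4)[OF cG, of u v] unfolding adj_chord by blast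
  have inV: "adj (chordG m) u v \<Longrightarrow> u \<in> verts (chordG m) \<and> v \<in> verts (chordG m)" for u v
    using GRAPH_D(2,3)[OF cG, of u v] m unfolding adj_chord by auto
  have fin: "finite (verts (chordG m))" by simp
  show ?thesis unfolding GRAPH_def
  proof (intro CollectI conjI allI ballI impI)
    show "finite (verts (chordG m))" "verts (chordG m) \<noteq> {}" by (fact fin, fact ne)
  next
    fix u v assume "adj (chordG m) u v" then show "u \<in> verts (chordG m)" "v \<in> verts (chordG m)" using inV by blast+
  next
    fix u v show "adj (chordG m) u v = adj (chordG m) v u" by (rule sym)
  next
    fix u show "\<not> adj (chordG m) u u" by (rule irr)
  next
    fix u v assume "u \<in> verts (chordG m)" "v \<in> verts (chordG m)"
    then show "\<exists>k. near (chordG m) k u v" using conn by simp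
  qed
qed

lemma chord_ham: assumes m: "2 \<le> m" shows "chordG m \<in> HAMILTONIAN"
proof (rule ham_intro[OF chord_GRAPH[OF m], of "2*m"])
  show "verts (chordG m) = {..<2 * m}" by simp
  show "3 \<le> 2 * m" using m by simp
  show "adj (chordG m) i (Suc i)" if "Suc i < 2 * m" for i using that by (simp add: adj_chord cyc_adj_nat)
  have "Suc (2 * m - 1) = 2 * m" using m by simp
  then show "adj (chordG m) (2 * m - 1) 0" using m by (simp add: adj_chord cyc_adj_nat)
qed



locale dbl =
  fixes m n :: nat
  assumes m2: "2 \<le> m" and nm: "n = 2 * m"
begin

lemma n4: "4 \<le> n" using m2 nm by simp

lemma adj_dbl: "adj (dblG m) u v \<longleftrightarrow> u < 2*n \<and> v < 2*n \<and>
     ((u div n = v div n \<and> adj (cycG n) (u mod n) (v mod n))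
     \<or> (u div n \<noteq> v div n \<and> ((u mod n = 0 \<and> v mod n = m) \<or> (u mod n = m \<and> v mod n = 0))))"
  unfolding dblG_def nm by (simp add: mult.assoc)

lemma verts_dbl': "verts (dblG m) = {..<2*n}" using nm by simp

lemma cyc_adj_lt: "adj (cycG n) a b \<Longrightarrow> a < n \<and> b < n" by (simp add: cyc_adj_nat)

lemma copy_adj: "s \<le> 1 \<Longrightarrow> adj (cycG n) a b \<Longrightarrow> adj (dblG m) (s * n + a) (s * n + b)"
proof -
  assume s: "s \<le> 1" and ab: "adj (cycG n) a b"
  have ab': "a < n" "b < n" using cyc_adj_lt[OF ab] by auto
  have "s * n + a < 2 * n" "s * n + b < 2 * n" using s ab' by (cases s; simp)+
  moreover have "(s * n + a) div n = s" "(s * n + b) div n = s" using ab' by simp_all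
  moreover have "(s * n + a) mod n = a" "(s * n + b) mod n = b" using ab' by simp_all
  ultimately show ?thesis unfolding adj_dbl using ab by simp
qed

lemma copy_near: assumes s: "s \<le> 1" and ab: "a < n" "b < n" shows "\<exists>k. near (dblG m) k (s * n + a) (s * n + b)"
proof -
  obtain k where k: "near (cycG n) k a b" using cyc_conn[OF ab] by blast
  have "near (dblG m) k ((\<lambda>x. s * n + x) a) ((\<lambda>x. s * n + x) b)"
  proof (rule near_hom[OF k])
    fix x y assume "adj (cycG n) x y" then show "adj (dblG m) (s * n + x) (s * n + y)" by (rule copy_adj[OF s])
  next
    fix x assume "x \<in> verts (cycG n)" then show "s * n + x \<in> verts (dblG m)" using s verts_dbl' by (cases s) auto
  qed
  then show ?thesis by auto
qed

lemma chord_adj: "s \<le> 1 \<Longrightarrow> adj (dblG m) (s * n) ((1 - s) * n + m)"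
proof -
  assume s: "s \<le> 1"
  have mn: "m < n" using nm m2 by simp
  show ?thesis unfolding adj_dbl using s mn by (cases s) auto
qed

lemma dbl_GRAPH: "dblG m \<in> GRAPH"
proof -
  have cG: "cycG n \<in> GRAPH" using n4 by (intro cyc_GRAPH) simp
  have mn: "m < n" using nm m2 by simp
  have dm: "\<And>u. u < 2 * n \<Longrightarrow> u div n \<le> 1 \<and> u = u div n * n + u mod n \<and> u mod n < n"
  proof -
    fix u assume "u < 2 * n"
    then have "u div n < 2" using less_mult_imp_div_less[of u 2 n] by (simp add: mult.commute)
    moreover have "u mod n < n" using n4 by simp
    ultimately show "u div n \<le> 1 \<and> u = u div n * n + u mod n \<and> u mod n < n" by simp
  qed
  have conn: "\<exists>k. near (dblG m) k u v" if uv: "u < 2 * n" "v < 2 * n" for u v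
  proof (cases "u div n = v div n")
    case True
    then show ?thesis using copy_near[of "u div n" "u mod n" "v mod n"] dm[OF uv(1)] dm[OF uv(2)] by metis
  next
    case False
    define s where "s = u div n"
    have s: "s \<le> 1" "v div n = 1 - s" using dm[OF uv(1)] dm[OF uv(2)] False unfolding s_def by auto
    obtain k1 where k1: "near (dblG m) k1 u (s * n + 0)" using copy_near[OF s(1), of "u mod n" 0] dm[OF uv(1)] n4 unfolding s_def by auto
    have "s * n < 2 * n" using s n4 by (cases s) auto
    then have "near (dblG m) 0 (s * n) (s * n)" using nm by simp
    then have "near (dblG m) 1 (s * n) ((1 - s) * n + m)" using chord_adj[OF s(1)] near_snoc by (metis One_nat_def)
    moreover obtain k2 where k2: "near (dblG m) k2 ((1 - s) * n + m) v" using copy_near[of "1 - s" m "v mod n"] dm[OF uv(2)] s mn by auto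
    ultimately show ?thesis using near_trans k1 by (metis add_0_right)
  qed
  have "0 \<in> verts (dblG m)" using n4 verts_dbl' by simp
  then have ne: "verts (dblG m) \<noteq> {}" by blast
  have irr: "\<not> adj (dblG m) u u" for u using GRAPH_D(5)[OF cG] unfolding adj_dbl by auto
  have sym: "adj (dblG m) u v = adj (dblG m) v u" for u v using GRAPH_D(4)[OF cG, of "u mod n" "v mod n"] unfolding adj_dbl by auto
  have inV: "adj (dblG m) u v \<Longrightarrow> u \<in> verts (dblG m) \<and> v \<in> verts (dblG m)" for u v
    unfolding adj_dbl verts_dbl' by auto
  have fin: "finite (verts (dblG m))" by simp
  show ?thesis unfolding GRAPH_def
  proof (intro CollectI conjI allI ballI impI)
    show "finite (verts (dblG m))" "verts (dblG m) \<noteq> {}" by (fact fin, fact ne)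
  next
    fix u v assume "adj (dblG m) u v" then show "u \<in> verts (dblG m)" "v \<in> verts (dblG m)" using inV by blast+
  next
    fix u v show "adj (dblG m) u v = adj (dblG m) v u" by (rule sym)
  next
    fix u show "\<not> adj (dblG m) u u" by (rule irr)
  next
    fix u v assume "u \<in> verts (dblG m)" "v \<in> verts (dblG m)"
    then show "\<exists>k. near (dblG m) k u v" using conn verts_dbl' by simp
  qed
qed

lemma dm: "u < 2 * n \<Longrightarrow> u div n \<le> 1 \<and> u = u div n * n + u mod n \<and> u mod n < n"
proof -
  assume "u < 2 * n"
  then have "u div n < 2" using less_mult_imp_div_less[of u 2 n] by (simp add: mult.commute)
  moreover have "u mod n < n" using n4 by simp
  ultimately show "u div n \<le> 1 \<and> u = u div n * n + u mod n \<and> u mod n < n" by simp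
qed

lemma not_cyc_0m: "\<not> adj (cycG n) 0 m" "\<not> adj (cycG n) m 0"
proof -
  have "m \<noteq> Suc 0 mod n" using m2 n4 by simp
  moreover have "0 \<noteq> Suc m mod n" using m2 nm by simp
  ultimately show "\<not> adj (cycG n) 0 m" "\<not> adj (cycG n) m 0" by (auto simp: cyc_adj_nat)
qed

lemma adj_chord': "adj (chordG m) u v \<longleftrightarrow> adj (cycG n) u v \<or> (u = 0 \<and> v = m) \<or> (u = m \<and> v = 0)"
  unfolding adj_chord nm ..

lemma loccov_dbl:
  assumes u: "u < 2 * n"
  shows "loccov (dblG m) (chordG m) (\<lambda>v. idC (v mod n)) idC (\<lambda>v. \<kappa>G (v mod n)) \<kappa>G (\<lambda>v. v mod n) u"
  unfolding loccov_def
proof (intro conjI allI impI)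
  show "lab (dblG m) u = lab (chordG m) (u mod n)" by (simp add: dblG_def chordG_def)
  show "idC (u mod n) = idC (u mod n)" "\<kappa>G (u mod n) = \<kappa>G (u mod n)" by simp_all
  fix x assume "adj (dblG m) u x"
  then show "adj (chordG m) (u mod n) (x mod n)" unfolding adj_dbl adj_chord' by auto
next
  fix y assume a: "adj (chordG m) (u mod n) y"
  have du: "u div n \<le> 1" "u mod n < n" using dm[OF u] by auto
  have mn: "m < n" using nm m2 by simp
  from a have "adj (cycG n) (u mod n) y \<or> (u mod n = 0 \<and> y = m) \<or> (u mod n = m \<and> y = 0)" unfolding adj_chord' .
  then show "\<exists>x. adj (dblG m) u x \<and> x mod n = y"
  proof (elim disjE conjE)
    assume c: "adj (cycG n) (u mod n) y"
    then have y: "y < n" using cyc_adj_lt by blast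
    define x where "x = u div n * n + y"
    have "x < 2 * n" "x div n = u div n" "x mod n = y" unfolding x_def using du y by (cases "u div n"; simp)+
    then show ?thesis using c u unfolding adj_dbl by (intro exI[of _ x]) simp
  next
    assume c: "u mod n = 0" "y = m"
    define x where "x = (1 - u div n) * n + m"
    have "x < 2 * n" "x div n \<noteq> u div n" "x mod n = m" unfolding x_def using du mn by (cases "u div n"; simp)+
    then show ?thesis using c u unfolding adj_dbl by (intro exI[of _ x]) simp
  next
    assume c: "u mod n = m" "y = 0"
    define x where "x = (1 - u div n) * n"
    have "x < 2 * n" "x div n \<noteq> u div n" "x mod n = 0" unfolding x_def using du n4 by (cases "u div n"; simp)+
    then show ?thesis using c u unfolding adj_dbl by (intro exI[of _ x]) simp
  qed
next
  show "inj_on (\<lambda>v. v mod n) {x. adj (dblG m) u x}"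
  proof (rule inj_onI)
    fix x x' assume x: "x \<in> {x. adj (dblG m) u x}" and x': "x' \<in> {x. adj (dblG m) u x}" and e: "x mod n = x' mod n"
    have xl: "x < 2 * n" "x' < 2 * n" using x x' unfolding adj_dbl by auto
    have dx: "x div n \<le> 1" "x' div n \<le> 1" "u div n \<le> 1" using dm xl u by auto
    show "x = x'"
    proof (cases "x div n = x' div n")
      case True
      then show ?thesis using e dm[OF xl(1)] dm[OF xl(2)] by metis
    next
      case False
      then have "x div n = u div n \<and> x' div n \<noteq> u div n \<or> x div n \<noteq> u div n \<and> x' div n = u div n"
        using dx by linarith
      then show ?thesis
      proof (elim disjE conjE)
        assume "x div n = u div n" "x' div n \<noteq> u div n"
        then have "adj (cycG n) (u mod n) (x mod n)" "(u mod n = 0 \<and> x' mod n = m) \<or> (u mod n = m \<and> x' mod n = 0)"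
          using x x' unfolding adj_dbl by auto
        then show ?thesis using e not_cyc_0m by auto
      next
        assume "x div n \<noteq> u div n" "x' div n = u div n"
        then have "adj (cycG n) (u mod n) (x' mod n)" "(u mod n = 0 \<and> x mod n = m) \<or> (u mod n = m \<and> x mod n = 0)"
          using x x' unfolding adj_dbl by auto
        then show ?thesis using e not_cyc_0m by auto
      qed
    qed
  qed
qed

end



lemma cyc_nb2: assumes w: "w < n" and n: "2 \<le> n"
  shows "adj (cycG n) w y \<longleftrightarrow> y = Suc w mod n \<or> y = (w + n - 1) mod n"
proof
  assume "adj (cycG n) w y"
  then have y: "y < n" "y = Suc w mod n \<or> w = Suc y mod n" by (auto simp: cyc_adj_nat)
  show "y = Suc w mod n \<or> y = (w + n - 1) mod n"
  proof (cases "y = Suc w mod n")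
    case False
    then have wy: "w = Suc y mod n" using y by simp
    show ?thesis
    proof (cases "Suc y < n")
      case True
      then have "w = Suc y" using wy by simp
      then have "(w + n - 1) mod n = (y + n) mod n" by simp
      then show ?thesis using y by simp
    next
      case False
      then have "Suc y = n" using y by simp
      then have "w = 0" using wy by simp
      then have "(w + n - 1) mod n = y" using \<open>Suc y = n\<close> by simp
      then show ?thesis by simp
    qed
  qed simp
next
  assume "y = Suc w mod n \<or> y = (w + n - 1) mod n"
  then show "adj (cycG n) w y"
  proof
    assume "y = Suc w mod n" then show ?thesis using w n by (simp add: cyc_adj_nat)
  next
    assume y: "y = (w + n - 1) mod n"
    have "w = Suc y mod n"
    proof (cases "w = 0")
      case True
      then have "y = n - 1" using y n by simp
      then show ?thesis using True n by simp
    next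
      case False
      then have "y = w - 1" using y w by (simp add: mod_if)
      then show ?thesis using False w by simp
    qed
    moreover have "y < n" using y n by simp
    ultimately show ?thesis using w n by (simp add: cyc_adj_nat)
  qed
qed

context dbl begin

lemma nb_plain: assumes w: "w < n" "w \<noteq> 0" "w \<noteq> m"
  shows "adj (dblG m) w y \<longleftrightarrow> y < n \<and> adj (cycG n) w y"
proof -
  have wd: "w div n = 0" "w mod n = w" using w by simp_all
  show ?thesis
  proof
    assume a: "adj (dblG m) w y"
    then have "y div n = 0 \<and> adj (cycG n) w (y mod n)" using wd w unfolding adj_dbl by auto
    moreover have "y mod n = y" if "y div n = 0" using that by (metis div_mult_mod_eq mult_zero_left add_0)
    ultimately have "y div n = 0" "adj (cycG n) w y" by auto
    then show "y < n \<and> adj (cycG n) w y" using n4 by (simp add: div_eq_0_iff)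
  next
    assume "y < n \<and> adj (cycG n) w y"
    then show "adj (dblG m) w y" using wd w unfolding adj_dbl by simp
  qed
qed

lemma dbl_not_ham: "dblG m \<notin> HAMILTONIAN"
proof
  assume "dblG m \<in> HAMILTONIAN"
  then obtain c where d: "distinct c" and l3: "length c \<ge> 3" and sc: "set c = verts (dblG m)"
    and a: "\<forall>i < length c - 1. adj (dblG m) (c ! i) (c ! Suc i)" and la: "adj (dblG m) (last c) (hd c)"
    unfolding HAMILTONIAN_def by blast
  define l where "l = length c"
  have GR: "dblG m \<in> GRAPH" by (rule dbl_GRAPH)
  have sym: "\<And>u v. adj (dblG m) u v = adj (dblG m) v u" using GRAPH_D(4)[OF GR] by blast
  have cG: "cycG n \<in> GRAPH" using n4 by (intro cyc_GRAPH) simp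
  have csym: "\<And>u v. adj (cycG n) u v = adj (cycG n) v u" using GRAPH_D(4)[OF cG] by blast
  define nx where "nx i = Suc i mod l" for i
  define pv where "pv i = (i + l - 1) mod l" for i
  have cne: "c \<noteq> []" using l3 by auto
  have l3': "3 \<le> l" using l3 unfolding l_def .
  have idx: "\<And>i j. i < l \<Longrightarrow> j < l \<Longrightarrow> c ! i = c ! j \<Longrightarrow> i = j"
    using d unfolding l_def by (simp add: nth_eq_iff_index_eq)
  have nxl: "nx i < l" "pv i < l" for i unfolding nx_def pv_def using l3' by simp_all
  have A: "adj (dblG m) (c ! i) (c ! nx i)" if i: "i < l" for i
  proof (cases "Suc i < l")
    case True
    then show ?thesis using a unfolding nx_def l_def by simp
  next
    case False
    then have "Suc i = l" using i by simp
    then have "i = l - 1" "nx i = 0" unfolding nx_def by auto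
    then show ?thesis using la cne unfolding l_def by (simp add: last_conv_nth hd_conv_nth)
  qed
  have nxpv: "nx (pv i) = i" "pv (nx i) = i" if i: "i < l" for i
  proof -
    show "nx (pv i) = i"
    proof (cases "i = 0")
      case True then show ?thesis unfolding nx_def pv_def using l3' by simp
    next
      case False then have "pv i = i - 1" unfolding pv_def using i by (simp add: mod_if)
      then show ?thesis unfolding nx_def using i False by simp
    qed
    show "pv (nx i) = i"
    proof (cases "Suc i < l")
      case True then show ?thesis unfolding nx_def pv_def by simp
    next
      case False then have "Suc i = l" using i by simp
      then show ?thesis unfolding nx_def pv_def by simp
    qed
  qed
  have B: "adj (dblG m) (c ! i) (c ! pv i)" if i: "i < l" for i
    using A[OF nxl(2)] nxpv(1)[OF i] sym by metis
  have C: "c ! nx i \<noteq> c ! pv i" if i: "i < l" for i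
  proof
    assume "c ! nx i = c ! pv i"
    then have "nx i = pv i" using idx nxl by blast
    then show False unfolding nx_def pv_def using i l3'
      by (cases "Suc i < l"; cases "i = 0") (auto simp: mod_if split: if_splits)
  qed
  have inV: "\<And>w. w < 2 * n \<Longrightarrow> \<exists>j<l. c ! j = w"
    using sc verts_dbl' unfolding l_def by (metis in_set_conv_nth lessThan_iff)
  have key: "c ! nx i = w \<or> c ! pv i = w"
    if w: "w < n" "w \<noteq> 0" "w \<noteq> m" and j: "j < l" "c ! j = w" and i: "i < l" and cw: "adj (cycG n) w (c ! i)" for w i j
  proof -
    let ?S = "{Suc w mod n, (w + n - 1) mod n}"
    have N: "\<And>y. adj (dblG m) w y \<Longrightarrow> y \<in> ?S" using nb_plain[OF w] cyc_nb2[OF w(1)] n4 by auto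
    have s1: "c ! nx j \<in> ?S" "c ! pv j \<in> ?S" using N A[OF j(1)] B[OF j(1)] j by auto
    have ci: "c ! i \<in> ?S" using cw cyc_nb2[OF w(1)] n4 by auto
    have "c ! i = c ! nx j \<or> c ! i = c ! pv j" using s1 ci C[OF j(1)] by auto
    then show ?thesis
    proof
      assume "c ! i = c ! nx j"
      then have "i = nx j" using idx i nxl by blast
      then show ?thesis using nxpv(2)[OF j(1)] j by simp
    next
      assume "c ! i = c ! pv j"
      then have "i = pv j" using idx i nxl by blast
      then show ?thesis using nxpv(1)[OF j(1)] j by simp
    qed
  qed
  have K: "c ! nx i < n" if i: "i < l" and ci: "c ! i < n" for i
  proof (cases "c ! i = 0 \<or> c ! i = m")
    case False
    then have "adj (dblG m) (c ! i) (c ! nx i)" using A[OF i] by simp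
    then show ?thesis using nb_plain[of "c ! i"] ci False by auto
  next
    case True
    define u where "u = c ! i"
    have u: "u < n" "u = 0 \<or> u = m" using ci True unfolding u_def by auto
    define w1 where "w1 = Suc u mod n"
    define w2 where "w2 = (u + n - 1) mod n"
    have mn: "Suc m < n" using m2 nm by simp
    have w1v: "w1 = (if u = 0 then 1 else Suc m)" using u mn n4 unfolding w1_def by auto
    have w2v: "w2 = (if u = 0 then n - 1 else m - 1)"
    proof (cases "u = 0")
      case True then show ?thesis unfolding w2_def using n4 by simp
    next
      case False
      then have "u = m" using u by simp
      then have "u + n - 1 = (m - 1) + n" using m2 by simp
      then have "w2 = (m - 1) mod n" unfolding w2_def by simp
      then show ?thesis using False mn by simp
    qed
    have w1: "w1 < n" "w1 \<noteq> 0" "w1 \<noteq> m" using w1v mn m2 by auto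
    have w2: "w2 < n" "w2 \<noteq> 0" "w2 \<noteq> m" using w2v m2 nm by auto
    have w12: "w1 \<noteq> w2" using w1v w2v m2 nm by auto
    have cw: "adj (cycG n) w1 u" "adj (cycG n) w2 u"
      using cyc_nb2[OF u(1), of w1] cyc_nb2[OF u(1), of w2] n4 csym unfolding w1_def w2_def by auto
    have "w1 < 2 * n" "w2 < 2 * n" using w1 w2 by simp_all
    then obtain j1 j2 where j1: "j1 < l" "c ! j1 = w1" and j2: "j2 < l" "c ! j2 = w2" using inV by meson
    have "c ! nx i = w1 \<or> c ! pv i = w1" using key[OF w1 j1 i] cw(1) unfolding u_def by simp
    moreover have "c ! nx i = w2 \<or> c ! pv i = w2" using key[OF w2 j2 i] cw(2) unfolding u_def by simp
    ultimately have "c ! nx i = w1 \<or> c ! nx i = w2" using w12 by auto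
    then show ?thesis using w1 w2 by auto
  qed
  have "0 < 2 * n" using n4 by simp
  then obtain i0 where i0: "i0 < l" "c ! i0 = 0" using inV by meson
  have all: "c ! ((i0 + j) mod l) < n" for j
  proof (induction j)
    case 0 then show ?case using i0 n4 by simp
  next
    case (Suc j)
    have "nx ((i0 + j) mod l) = (i0 + Suc j) mod l" unfolding nx_def by (simp add: mod_Suc_eq)
    then show ?case using K[of "(i0 + j) mod l"] Suc l3' by simp
  qed
  have "n < 2 * n" using n4 by simp
  then obtain p where p: "p < l" "c ! p = n" using inV by meson
  have "(i0 + (p + l - i0)) mod l = p" using p i0 by simp
  then have "c ! p < n" using all[of "p + l - i0"] by simp
  then show False using p by simp
qed

end



lemma lift:
  assumes H: "H \<in> GRAPH" and lc: "\<And>x. x \<in> verts H \<Longrightarrow> loccov H G idH idG \<kappa>H \<kappa>G F x"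
    and u: "u \<in> verts H"
  shows "near G d (F u) y \<Longrightarrow> \<exists>x. near H d u x \<and> F x = y"
proof (induction d arbitrary: y)
  case 0 then show ?case using u by auto
next
  case (Suc d)
  from Suc.prems have "near G d (F u) y \<or> (\<exists>w. near G d (F u) w \<and> adj G w y)" by simp
  then show ?case
  proof (elim disjE exE conjE)
    assume "near G d (F u) y"
    then obtain x where "near H d u x" "F x = y" using Suc.IH by blast
    then show ?thesis by auto
  next
    fix w assume "near G d (F u) w" "adj G w y"
    then obtain x' where x': "near H d u x'" "F x' = w" using Suc.IH by blast
    have "x' \<in> verts H" using near_end[OF H x'(1)] .
    then obtain x where "adj H x' x" "F x = y" using lc \<open>adj G w y\<close> x'(2) unfolding loccov_def by blast
    moreover have "near H (Suc d) u x" using near_snoc[OF x'(1) \<open>adj H x' x\<close>] .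
    ultimately show ?thesis by blast
  qed
qed

context dbl begin

definition cd :: "nat \<Rightarrow> nat \<Rightarrow> int" where
  "cd a k = min \<bar>int a - int k\<bar> (int n - \<bar>int a - int k\<bar>)"

lemma cd_lip: assumes "a < n" "k < n" "adj (cycG n) a b" shows "\<bar>cd a k - cd b k\<bar> \<le> 1"
proof -
  from assms(3) have b: "b < n" "b = Suc a mod n \<or> a = Suc b mod n" by (auto simp: cyc_adj_nat)
  from b(2) show ?thesis
  proof
    assume e: "b = Suc a mod n"
    show ?thesis
    proof (cases "Suc a < n")
      case True then have "b = Suc a" using e by simp
      then show ?thesis unfolding cd_def using assms b by arith
    next
      case False then have "Suc a = n" using assms by simp
      then have "b = 0" "a = n - 1" using e by auto
      then show ?thesis unfolding cd_def using assms b by arith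
    qed
  next
    assume e: "a = Suc b mod n"
    show ?thesis
    proof (cases "Suc b < n")
      case True then have "a = Suc b" using e by simp
      then show ?thesis unfolding cd_def using assms b by arith
    next
      case False then have "Suc b = n" using b by simp
      then have "a = 0" "b = n - 1" using e by auto
      then show ?thesis unfolding cd_def using assms b by arith
    qed
  qed
qed

lemma cd_chord: "k < n \<Longrightarrow> cd 0 k + cd m k = int m"
  unfolding cd_def using nm by arith

definition phi :: "nat \<Rightarrow> nat \<Rightarrow> int" where
  "phi k v = (if v < n then cd (v mod n) k else int m - cd (v mod n) k)"

lemma phi_lip: assumes k: "k < n" and a: "adj (dblG m) u v" shows "\<bar>phi k v - phi k u\<bar> \<le> 1"
proof -
  have uv: "u < 2 * n" "v < 2 * n" using a unfolding adj_dbl by auto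
  have lt: "\<And>x. x < 2 * n \<Longrightarrow> (x < n \<longleftrightarrow> x div n = 0)" using n4 by (auto simp: div_eq_0_iff)
  have mn: "u mod n < n" "v mod n < n" using n4 by simp_all
  from a consider (s) "u div n = v div n" "adj (cycG n) (u mod n) (v mod n)"
    | (c) "u div n \<noteq> v div n" "(u mod n = 0 \<and> v mod n = m) \<or> (u mod n = m \<and> v mod n = 0)"
    unfolding adj_dbl by blast
  then show ?thesis
  proof cases
    case s
    then have "u < n \<longleftrightarrow> v < n" using lt uv by simp
    then show ?thesis unfolding phi_def using cd_lip[OF mn(1) k s(2)] by (auto simp: abs_minus_commute)
  next
    case c
    then have "u < n \<longleftrightarrow> \<not> v < n" using lt uv dm by (metis le_less_trans less_one nat_less_le linorder_neqE_nat le_simps(3) div_less)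
    then show ?thesis unfolding phi_def using c cd_chord[OF k] by auto
  qed
qed

lemma phi_near: assumes k: "k < n" shows "near (dblG m) d u v \<Longrightarrow> \<bar>phi k v - phi k u\<bar> \<le> int d"
proof (induction d arbitrary: v)
  case 0 then show ?case by simp
next
  case (Suc d)
  from Suc.prems have "near (dblG m) d u v \<or> (\<exists>w. near (dblG m) d u w \<and> adj (dblG m) w v)" by simp
  then show ?case
  proof (elim disjE exE conjE)
    assume "near (dblG m) d u v" then show ?thesis using Suc.IH by force
  next
    fix w assume "near (dblG m) d u w" "adj (dblG m) w v"
    then show ?thesis using Suc.IH[of w] phi_lip[OF k, of w v] by linarith
  qed
qed

lemma lu_dbl: assumes r: "2 * r' < m" and B: "n \<le> 2 ^ B"
  shows "locally_unique r' (dblG m) (\<lambda>v. bin B (v mod n))"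
  unfolding locally_unique_def
proof (intro ballI impI, elim conjE)
  fix u v assume u: "u \<in> verts (dblG m)" and v: "v \<in> verts (dblG m)" and uv: "u \<noteq> v" "near (dblG m) (2 * r') u v"
  show "bin B (u mod n) \<noteq> bin B (v mod n)"
  proof
    assume "bin B (u mod n) = bin B (v mod n)"
    moreover have "u mod n < 2 ^ B" "v mod n < 2 ^ B" using B n4 by (meson mod_less_divisor order_less_le_trans zero_less_numeral less_le_trans)+
    ultimately have e: "u mod n = v mod n" using bin_inj by blast
    define k where "k = u mod n"
    have k: "k < n" unfolding k_def using n4 by simp
    have u2: "u < 2 * n" "v < 2 * n" using u v verts_dbl' by auto
    have "u div n \<noteq> v div n" using uv(1) e by (metis div_mult_mod_eq)
    then have "(u < n \<and> \<not> v < n) \<or> (\<not> u < n \<and> v < n)" using u2 dm n4 by (metis div_eq_0_iff le_less less_one not_less_zero linorder_neqE_nat le_simps(3))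
    moreover have "cd k k = 0" unfolding cd_def using n4 by simp
    ultimately have "\<bar>phi k v - phi k u\<bar> = int m" unfolding phi_def k_def using e by auto
    moreover have "\<bar>phi k v - phi k u\<bar> \<le> int (2 * r')" by (rule phi_near[OF k uv(2)])
    ultimately show False using r by linarith
  qed
qed

end



lemma lu_inj:
  assumes "\<forall>u\<in>verts G. \<forall>v\<in>verts G. u \<noteq> v \<longrightarrow> idf u \<noteq> idf v"
  shows "locally_unique r' G idf"
  using assms unfolding locally_unique_def by blast

lemma ham_fool: assumes NLP: "HAMILTONIAN \<in> NLP" shows False
proof -
  obtain M r_id r p where lp: "local_poly M" and rid: "r_id \<ge> 1" and r1: "r \<ge> 1"
    and ch: "\<forall>G\<in>GRAPH. \<forall>idf. locally_unique r_id G idf \<longrightarrow>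
        (G \<in> HAMILTONIAN \<longleftrightarrow> (\<exists>\<kappa>. cert_bounded r p G idf \<kappa> \<and> accepts M G idf \<kappa>))"
    using NLP unfolding NLP_def by blast
  obtain c q where lpc: "\<forall>G\<in>GRAPH. \<forall>idf \<kappa>. locally_unique 1 G idf \<longrightarrow>
     (\<forall>u\<in>verts G. fst (exec M G idf \<kappa> c u))"
    using lp unfolding local_poly_def by blast
  define m where "m = 2 * r_id + 2"
  define n where "n = 2 * m"
  interpret D: dbl m n by unfold_locales (simp_all add: m_def n_def)
  define B where "B = n"
  have nB: "n \<le> 2 ^ B" unfolding B_def by (simp add: less_imp_le)
  define idC where "idC v = bin B v" for v
  define G where "G = chordG m"
  have m2: "2 \<le> m" unfolding m_def by simp
  have GG: "G \<in> GRAPH" unfolding G_def by (rule chord_GRAPH[OF m2])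
  have injC: "\<forall>u\<in>verts G. \<forall>v\<in>verts G. u \<noteq> v \<longrightarrow> idC u \<noteq> idC v"
  proof (intro ballI impI)
    fix u v assume "u \<in> verts G" "v \<in> verts G" "u \<noteq> v"
    then have "u < 2 ^ B" "v < 2 ^ B" using nB unfolding G_def n_def by auto
    then show "idC u \<noteq> idC v" using \<open>u \<noteq> v\<close> bin_inj unfolding idC_def by blast
  qed
  have luG: "locally_unique r_id G idC" by (rule lu_inj[OF injC])
  have lu1: "locally_unique 1 G idC" by (rule lu_inj[OF injC])
  obtain \<kappa> where cb: "cert_bounded r p G idC \<kappa>" and acc: "accepts M G idC \<kappa>"
    using ch GG luG chord_ham[OF m2] unfolding G_def by blast
  have stopG: "\<forall>w\<in>verts G. fst (exec M G idC \<kappa> c w)" using lpc GG lu1 by blast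
  define H where "H = dblG m"
  define F where "F v = v mod n" for v
  define idH where "idH v = idC (v mod n)" for v
  define \<kappa>H where "\<kappa>H v = \<kappa> (v mod n)" for v
  have HG: "H \<in> GRAPH" unfolding H_def by (rule D.dbl_GRAPH)
  have lc: "loccov H G idH idC \<kappa>H \<kappa> F x" if "x \<in> verts H" for x
    using D.loccov_dbl[of x idC \<kappa>] that D.verts_dbl' unfolding H_def G_def idH_def \<kappa>H_def F_def by simp
  have luH: "locally_unique r_id H idH"
    using D.lu_dbl[of r_id B] nB unfolding H_def idH_def idC_def m_def by simp
  have FV: "F u \<in> verts G" if "u \<in> verts H" for u unfolding F_def G_def n_def using D.n4 n_def by simp
  have cbH: "cert_bounded r p H idH \<kappa>H"
  proof (rule cert_transfer[OF cb HG])
    show "\<forall>v. lab G v = []" "\<forall>v. lab H v = []" by (simp_all add: G_def H_def chordG_def dblG_def)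
    show "\<forall>v. length (idC v) = B" "\<forall>v. length (idH v) = B" by (simp_all add: idC_def idH_def)
    show "\<forall>u\<in>verts H. \<exists>w\<in>verts G. \<kappa>H u = \<kappa> w \<and> card {v. near G r w v} \<le> card {v. near H r u v}"
    proof
      fix u assume u: "u \<in> verts H"
      have sub: "{v. near G r (F u) v} \<subseteq> F ` {v. near H r u v}"
        using lift[OF HG lc u] by blast
      have fin: "finite {v. near H r u v}"
        by (rule finite_subset[of _ "verts H"]) (use near_end[OF HG] GRAPH_D(1)[OF HG] in auto)
      have "card {v. near G r (F u) v} \<le> card (F ` {v. near H r u v})"
        using sub fin by (intro card_mono) auto
      also have "\<dots> \<le> card {v. near H r u v}" by (rule card_image_le[OF fin])
      finally show "\<exists>w\<in>verts G. \<kappa>H u = \<kappa> w \<and> card {v. near G r w v} \<le> card {v. near H r u v}"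
        using FV[OF u] unfolding \<kappa>H_def F_def by blast
    qed
  qed
  have accH: "accepts M H idH \<kappa>H"
  proof (rule accepts_transfer[OF acc stopG])
    show "\<forall>v\<in>verts H. \<exists>w\<in>verts G. \<forall>t\<le>c. exec M H idH \<kappa>H t v = exec M G idC \<kappa> t w"
    proof
      fix v assume v: "v \<in> verts H"
      have "\<forall>t\<le>c. exec M H idH \<kappa>H t v = exec M G idC \<kappa> t (F v)"
      proof (intro allI impI)
        fix t
        have "Qf H G idH idC \<kappa>H \<kappa> t v (F v)"
          unfolding Qf_def using v lc near_end[OF HG] by blast
        then show "exec M H idH \<kappa>H t v = exec M G idC \<kappa> t (F v)" by (rule exec_loccov[OF GG HG lu1])
      qed
      then show "\<exists>w\<in>verts G. \<forall>t\<le>c. exec M H idH \<kappa>H t v = exec M G idC \<kappa> t w" using FV[OF v] by blast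
    qed
  qed
  have "H \<in> HAMILTONIAN" using ch HG luH cbH accH by blast
  then show False using D.dbl_not_ham unfolding H_def by blast
qed

theorem corollary9p6:
  shows "NON_EULERIAN \<notin> NLP \<and> HAMILTONIAN \<notin> NLP \<and> NON_HAMILTONIAN \<notin> NLP"
proof (intro conjI notI)
  assume "NON_EULERIAN \<in> NLP"
  then show False
  proof (rule path_fool)
    fix N :: nat assume "2 \<le> N" then show "pathG N \<in> NON_EULERIAN"
      unfolding NON_EULERIAN_def using path_GRAPH path_not_ham_eul by simp
  next
    fix L :: nat assume "3 \<le> L" then show "cycG L \<notin> NON_EULERIAN"
      unfolding NON_EULERIAN_def using cyc_eul by simp
  qed
next
  assume "HAMILTONIAN \<in> NLP" then show False by (rule ham_fool)
next
  assume "NON_HAMILTONIAN \<in> NLP"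
  then show False
  proof (rule path_fool)
    fix N :: nat assume "2 \<le> N" then show "pathG N \<in> NON_HAMILTONIAN"
      unfolding NON_HAMILTONIAN_def using path_GRAPH path_not_ham_eul by simp
  next
    fix L :: nat assume "3 \<le> L" then show "cycG L \<notin> NON_HAMILTONIAN"
      unfolding NON_HAMILTONIAN_def using cyc_ham by simp
  qed
qed


end
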